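(* Let $j\in\mathbb{N}$, let $u$ be a (smooth, sufficiently decaying) solution of the $j$th dNLS hierarchy equation and let $v=\mathcal{G}_-(u)$. Write $G_u=\exp\big(-i\int_{-\infty}^x|u(y,t)|^2dy\big)$, so that $i\partial_tv+(-1)^{j+1}\partial_x^{2j}v=G_u\big(i\partial_tu+(-1)^{j+1}\partial_x^{2j}u+P\big)$, where $P$ is computed by the Leibniz rule, substituting the $j$th dNLS hierarchy equation for $\partial_tu,\partial_t\overline u$ inside the integral $\int_{-\infty}^x\partial_t|u|^2$. Then the coefficient of the `bad' cubic term $(\partial_x^{2j-1-\ell}u)\,\overline{u}\,(\partial_x^{\ell}u)$ ($0\le \ell\le 2j-1$; cubic terms with no derivative on $\overline u$) in this expression, written in terms of $u$, is $$i(-1)^{j+1}\Big(\binom{2j+1}{\ell+1}-\delta_{0,\ell}-\delta_{2j-1,\ell}\Big).$$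
   Context: The gauge-transformations are $\mathcal{G}_\pm:u(x,t)\mapsto\exp\big(\pm i\int_{-\infty}^x|u(y,t)|^2dy\big)u(x,t)$. Define recursively $Y_0=-\frac{r}{2i}$, $Y_{n+1}=\frac{1}{2i}\big[\partial_xY_n+q\sum_{k=0}^nY_{n-k}Y_k\big]$, with $q=u$, $r=\overline u$. The $j$th dNLS hierarchy equation is $i\partial_tu=2\alpha_{2j-1}\partial_x\frac{\delta}{\delta\overline u}\int_{\mathbb{R}}uY_{2j-1}dx$ with $\alpha_{2j-1}=2^{2j-1}$, where $\frac{\delta}{\delta\phi}\int f(\phi,\dots,\partial_x^N\phi)dx=\sum_{k=0}^N(-1)^k\partial_x^k\frac{\partial f}{\partial(\partial_x^k\phi)}$; it has the form $i\partial_tu+(-1)^{j+1}\partial_x^{2j}u=$ (nonlinear terms). *)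

theory Defs
  imports Complex_Main "HOL-Library.Poly_Mapping"
begin

text \<open>Differential variables: Uv k stands for the k-th x-derivative of u (= q),
  Rv k for the k-th x-derivative of the conjugate of u (= r).\<close>
datatype dvar = Uv nat | Rv nat

type_synonym dmono = "dvar \<Rightarrow>\<^sub>0 nat"
type_synonym dpoly = "dmono \<Rightarrow>\<^sub>0 complex"

definition dconst :: "complex \<Rightarrow> dpoly" where
  "dconst c = Poly_Mapping.single 0 c"

definition dmonom :: "dmono \<Rightarrow> dpoly" where
  "dmonom m = Poly_Mapping.single m 1"

definition dvarp :: "dvar \<Rightarrow> dpoly" where
  "dvarp x = dmonom (Poly_Mapping.single x 1)"

definition coeff_d :: "dpoly \<Rightarrow> dmono \<Rightarrow> complex" where
  "coeff_d p m = Poly_Mapping.lookup p m"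

fun dsucc :: "dvar \<Rightarrow> dvar" where
  "dsucc (Uv k) = Uv (Suc k)"
| "dsucc (Rv k) = Rv (Suc k)"

fun dswap :: "dvar \<Rightarrow> dvar" where
  "dswap (Uv k) = Rv k"
| "dswap (Rv k) = Uv k"

definition Dmono :: "dmono \<Rightarrow> dpoly" where
  "Dmono m = (\<Sum>x\<in>Poly_Mapping.keys m.
      dconst (of_nat (Poly_Mapping.lookup m x)) *
      dmonom (m - Poly_Mapping.single x 1 + Poly_Mapping.single (dsucc x) 1))"

definition Dx :: "dpoly \<Rightarrow> dpoly" where
  "Dx p = (\<Sum>m\<in>Poly_Mapping.keys p. dconst (Poly_Mapping.lookup p m) * Dmono m)"

definition pderiv_d :: "dvar \<Rightarrow> dpoly \<Rightarrow> dpoly" where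
  "pderiv_d x p = (\<Sum>m\<in>Poly_Mapping.keys p.
      dconst (Poly_Mapping.lookup p m * of_nat (Poly_Mapping.lookup m x)) *
      (if x \<in> Poly_Mapping.keys m then dmonom (m - Poly_Mapping.single x 1) else 0))"

definition swap_mono :: "dmono \<Rightarrow> dmono" where
  "swap_mono m = (\<Sum>x\<in>Poly_Mapping.keys m. Poly_Mapping.single (dswap x) (Poly_Mapping.lookup m x))"

definition conj_d :: "dpoly \<Rightarrow> dpoly" where
  "conj_d p = (\<Sum>m\<in>Poly_Mapping.keys p. dconst (cnj (Poly_Mapping.lookup p m)) * dmonom (swap_mono m))"

text \<open>variational derivative with respect to conj u of the functional with density f:
  sum over k of (-1)^k D^k (df / d(r_k))\<close>
definition rorders :: "dpoly \<Rightarrow> nat set" where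
  "rorders f = {k. Rv k \<in> (\<Union>m\<in>Poly_Mapping.keys f. Poly_Mapping.keys m)}"

definition vder_r :: "dpoly \<Rightarrow> dpoly" where
  "vder_r f = (\<Sum>k\<in>rorders f. dconst ((-1) ^ k) * (Dx ^^ k) (pderiv_d (Rv k) f))"

abbreviation qd :: dpoly where "qd \<equiv> dvarp (Uv 0)"
abbreviation rd :: dpoly where "rd \<equiv> dvarp (Rv 0)"

fun Yd :: "nat \<Rightarrow> dpoly" where
  "Yd 0 = - dconst (1 / (2 * \<i>)) * rd"
| "Yd (Suc n) = dconst (1 / (2 * \<i>)) *
      (Dx (Yd n) + qd * (\<Sum>k\<in>{..n}. Yd (n - k) * Yd k))"

text \<open>alpha_{2j-1} = 2^(2j-1)\<close>
definition alpha_d :: "nat \<Rightarrow> complex" where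
  "alpha_d j = 2 ^ (2 * j - 1)"

text \<open>right-hand side of the j-th dNLS hierarchy equation: i u_t = hier_rhs j\<close>
definition hier_rhs :: "nat \<Rightarrow> dpoly" where
  "hier_rhs j = dconst (2 * alpha_d j) * Dx (vder_r (qd * Yd (2 * j - 1)))"

text \<open>u_t, and i u_t + (-1)^(j+1) d_x^(2j) u written in terms of u (the nonlinearity)\<close>
definition ut_d :: "nat \<Rightarrow> dpoly" where
  "ut_d j = dconst (- \<i>) * hier_rhs j"

definition hier_lhs :: "nat \<Rightarrow> dpoly" where
  "hier_lhs j = hier_rhs j + dconst ((-1) ^ (j + 1)) * dvarp (Uv (2 * j))"

definition dt_mass :: "nat \<Rightarrow> dpoly" where
  "dt_mass j = rd * ut_d j + qd * conj_d (ut_d j)"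

text \<open>the integral from -infinity to x of d_t |u|^2: the (unique) differential polynomial
  without constant term whose x-derivative is d_t |u|^2\<close>
definition mass_flux :: "nat \<Rightarrow> dpoly" where
  "mass_flux j = (THE F. Dx F = dt_mass j \<and> Poly_Mapping.lookup F 0 = 0)"

text \<open>g k = (d_x^k G_u) / G_u, where d_x G_u = - i |u|^2 G_u\<close>
fun gG :: "nat \<Rightarrow> dpoly" where
  "gG 0 = 1"
| "gG (Suc k) = Dx (gG k) - dconst \<i> * qd * rd * gG k"

text \<open>P from  i v_t + (-1)^(j+1) d^(2j) v = G_u (i u_t + (-1)^(j+1) d^(2j) u + P)\<close>
definition gaugeP :: "nat \<Rightarrow> dpoly" where
  "gaugeP j = qd * mass_flux j
     + dconst ((-1) ^ (j + 1)) *
       (\<Sum>k\<in>{1..2 * j}. dconst (of_nat (2 * j choose k)) * gG k * dvarp (Uv (2 * j - k)))"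

definition bad_mono :: "nat \<Rightarrow> nat \<Rightarrow> dmono" where
  "bad_mono j l = Poly_Mapping.single (Uv (2 * j - 1 - l)) 1 + Poly_Mapping.single (Rv 0) 1
                  + Poly_Mapping.single (Uv l) 1"

end

theory Submission
  imports Defs "HOL-Computational_Algebra.Formal_Power_Series"
begin

lemma lookup_pm_map: "Poly_Mapping.lookup (Poly_Mapping.map f p) k = (if Poly_Mapping.lookup p k = 0 then 0 else f (Poly_Mapping.lookup p k))"
  by (simp add: Poly_Mapping.map.rep_eq when_def)

lemma dconst_add: "dconst (a + b) = dconst a + dconst b"
  by (simp add: dconst_def single_add)
lemma dconst_mult: "dconst (a * b) = dconst a * dconst b"
  by (simp add: dconst_def mult_single)
lemma dconst_0[simp]: "dconst 0 = 0" by (simp add: dconst_def)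
lemma dconst_1[simp]: "dconst 1 = 1" by (simp add: dconst_def)
lemma dconst_uminus: "dconst (- a) = - dconst a" by (simp add: dconst_def single_uminus)
lemma dconst_diff: "dconst (a - b) = dconst a - dconst b" by (simp add: dconst_def single_diff)

lemma lookup_dconst_mult: "Poly_Mapping.lookup (dconst c * p) m = c * Poly_Mapping.lookup p m"
  by (simp add: dconst_def flip: mult_map_scale_conv_mult add: lookup_pm_map)

lemma lookup_dconst: "Poly_Mapping.lookup (dconst c) m = (if m = 0 then c else 0)"
  by (simp add: dconst_def lookup_single when_def)

lemma lookup_dmonom: "Poly_Mapping.lookup (dmonom m) m' = (if m' = m then 1 else 0)"
  by (simp add: dmonom_def lookup_single when_def)

lemma keys_dmonom[simp]: "Poly_Mapping.keys (dmonom m) = {m}"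
  by (simp add: dmonom_def)

lemma dmonom_add: "dmonom (a + b) = dmonom a * dmonom b"
  by (simp add: dmonom_def mult_single)

lemma dmonom_0[simp]: "dmonom 0 = 1" by (simp add: dmonom_def)

definition lin :: "(dmono \<Rightarrow> dpoly) \<Rightarrow> dpoly \<Rightarrow> dpoly" where
  "lin f p = (\<Sum>m\<in>Poly_Mapping.keys p. dconst (Poly_Mapping.lookup p m) * f m)"

lemma lin_superset:
  assumes "finite S" "Poly_Mapping.keys p \<subseteq> S"
  shows "lin f p = (\<Sum>m\<in>S. dconst (Poly_Mapping.lookup p m) * f m)"
  unfolding lin_def
  by (rule sum.mono_neutral_left[OF assms(1,2)]) (auto simp: in_keys_iff)

lemma lin_add: "lin f (p + q) = lin f p + lin f q"
proof -
  let ?S = "Poly_Mapping.keys p \<union> Poly_Mapping.keys q"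
  have "lin f (p + q) = (\<Sum>m\<in>?S. dconst (Poly_Mapping.lookup (p+q) m) * f m)"
    by (rule lin_superset) (auto simp: keys_add)
  also have "\<dots> = (\<Sum>m\<in>?S. dconst (Poly_Mapping.lookup p m) * f m) + (\<Sum>m\<in>?S. dconst (Poly_Mapping.lookup q m) * f m)"
    by (simp add: lookup_add dconst_add distrib_right sum.distrib)
  also have "\<dots> = lin f p + lin f q"
    using lin_superset[of ?S p f] lin_superset[of ?S q f] by simp
  finally show ?thesis .
qed

lemma lin_dconst_mult: "lin f (dconst c * p) = dconst c * lin f p"
proof -
  have "lin f (dconst c * p) = (\<Sum>m\<in>Poly_Mapping.keys p. dconst (Poly_Mapping.lookup (dconst c * p) m) * f m)"
    by (rule lin_superset) (auto simp: in_keys_iff lookup_dconst_mult)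
  also have "\<dots> = dconst c * lin f p"
    by (simp add: lin_def lookup_dconst_mult dconst_mult sum_distrib_left mult.assoc)
  finally show ?thesis .
qed

lemma lin_zero[simp]: "lin f 0 = 0" by (simp add: lin_def)

lemma lin_dmonom[simp]: "lin f (dmonom m) = f m"
  by (simp add: lin_def lookup_dmonom)

lemma lin_dconst: "lin f (dconst c) = dconst c * f 0"
proof -
  have "dconst c = dconst c * dmonom 0" by simp
  then show ?thesis by (metis lin_dconst_mult lin_dmonom)
qed

lemma lin_sum: "lin f (\<Sum>i\<in>I. g i) = (\<Sum>i\<in>I. lin f (g i))"
  by (induction I rule: infinite_finite_induct) (auto simp: lin_add)

lemma lin_uminus: "lin f (- p) = - lin f p"
  using lin_dconst_mult[of f "-1" p] by (simp add: dconst_uminus)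

lemma lin_diff: "lin f (p - q) = lin f p - lin f q"
  using lin_add[of f p "-q"] by (simp add: lin_uminus)

lemma poly_rep: "p = (\<Sum>m\<in>Poly_Mapping.keys p. dconst (Poly_Mapping.lookup p m) * dmonom m)"
proof (rule poly_mapping_eqI)
  fix k
  show "Poly_Mapping.lookup p k = Poly_Mapping.lookup (\<Sum>m\<in>Poly_Mapping.keys p. dconst (Poly_Mapping.lookup p m) * dmonom m) k"
  proof -
    have "(\<Sum>m\<in>Poly_Mapping.keys p. Poly_Mapping.lookup p m * (if k = m then 1 else 0)) =
          (\<Sum>m\<in>Poly_Mapping.keys p. if k = m then Poly_Mapping.lookup p m else 0)"
      by (rule sum.cong) auto
    also have "\<dots> = Poly_Mapping.lookup p k" by (simp add: sum.delta in_keys_iff)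
    finally show ?thesis by (simp add: lookup_sum lookup_dconst_mult lookup_dmonom)
  qed
qed

lemma lin_dmonom_id: "lin dmonom p = p"
  by (metis lin_def poly_rep)

lemma mult_rep: "p * q = (\<Sum>a\<in>Poly_Mapping.keys p. \<Sum>b\<in>Poly_Mapping.keys q.
      dconst (Poly_Mapping.lookup p a * Poly_Mapping.lookup q b) * dmonom (a + b))"
proof -
  have "p * q = (\<Sum>a\<in>Poly_Mapping.keys p. dconst (Poly_Mapping.lookup p a) * dmonom a) *
                (\<Sum>b\<in>Poly_Mapping.keys q. dconst (Poly_Mapping.lookup q b) * dmonom b)"
    using poly_rep[of p] poly_rep[of q] by simp
  also have "\<dots> = (\<Sum>a\<in>Poly_Mapping.keys p. \<Sum>b\<in>Poly_Mapping.keys q.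
      dconst (Poly_Mapping.lookup p a) * dmonom a * (dconst (Poly_Mapping.lookup q b) * dmonom b))"
    by (simp add: sum_product)
  also have "\<dots> = (\<Sum>a\<in>Poly_Mapping.keys p. \<Sum>b\<in>Poly_Mapping.keys q.
      dconst (Poly_Mapping.lookup p a * Poly_Mapping.lookup q b) * dmonom (a + b))"
    by (simp add: dconst_mult dmonom_add mult_ac)
  finally show ?thesis .
qed

lemma lin_mult_hom:
  assumes "\<And>a b. f (a + b) = f a * f b"
  shows "lin f (p * q) = lin f p * lin f q"
proof -
  have "lin f (p * q) = (\<Sum>a\<in>Poly_Mapping.keys p. \<Sum>b\<in>Poly_Mapping.keys q.
      dconst (Poly_Mapping.lookup p a * Poly_Mapping.lookup q b) * f (a + b))"
    by (subst mult_rep) (simp add: lin_sum lin_dconst_mult)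
  also have "\<dots> = (\<Sum>a\<in>Poly_Mapping.keys p. \<Sum>b\<in>Poly_Mapping.keys q.
      dconst (Poly_Mapping.lookup p a) * f a * (dconst (Poly_Mapping.lookup q b) * f b))"
    by (simp add: assms dconst_mult mult_ac)
  also have "\<dots> = lin f p * lin f q"
    by (simp add: lin_def sum_product)
  finally show ?thesis .
qed

lemma lin_mult_der:
  assumes "\<And>a b. f (a + b) = f a * dmonom b + dmonom a * f b"
  shows "lin f (p * q) = lin f p * q + p * lin f q"
proof -
  have "lin f (p * q) = (\<Sum>a\<in>Poly_Mapping.keys p. \<Sum>b\<in>Poly_Mapping.keys q.
      dconst (Poly_Mapping.lookup p a * Poly_Mapping.lookup q b) * f (a + b))"
    by (subst mult_rep) (simp add: lin_sum lin_dconst_mult)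
  also have "\<dots> = (\<Sum>a\<in>Poly_Mapping.keys p. \<Sum>b\<in>Poly_Mapping.keys q.
      dconst (Poly_Mapping.lookup p a) * f a * (dconst (Poly_Mapping.lookup q b) * dmonom b)) +
      (\<Sum>a\<in>Poly_Mapping.keys p. \<Sum>b\<in>Poly_Mapping.keys q.
      dconst (Poly_Mapping.lookup p a) * dmonom a * (dconst (Poly_Mapping.lookup q b) * f b))"
    by (simp add: assms dconst_mult algebra_simps sum.distrib)
  also have "\<dots> = lin f p * (\<Sum>b\<in>Poly_Mapping.keys q. dconst (Poly_Mapping.lookup q b) * dmonom b)
       + (\<Sum>a\<in>Poly_Mapping.keys p. dconst (Poly_Mapping.lookup p a) * dmonom a) * lin f q"
    by (simp add: lin_def sum_product)
  also have "\<dots> = lin f p * q + p * lin f q"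
    by (metis poly_rep)
  finally show ?thesis .
qed


lemma lookup_add_nat_zero: "Poly_Mapping.lookup (a + b) x = 0 \<longleftrightarrow> Poly_Mapping.lookup a x = 0 \<and> Poly_Mapping.lookup b x = (0::nat)"
  by (simp add: lookup_add)

lemma keys_add_nat: "Poly_Mapping.keys (a + b :: 'a \<Rightarrow>\<^sub>0 nat) = Poly_Mapping.keys a \<union> Poly_Mapping.keys b"
  by (auto simp: in_keys_iff lookup_add)

lemma mono_shift:
  assumes "Poly_Mapping.lookup a x \<noteq> 0"
  shows "(a + b - Poly_Mapping.single x 1 + c :: dmono) = (a - Poly_Mapping.single x 1 + c) + b"
  by (rule poly_mapping_eqI) (use assms in \<open>auto simp: lookup_add lookup_minus lookup_single when_def\<close>)

lemma mono_shift2: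
  assumes "Poly_Mapping.lookup b x \<noteq> 0"
  shows "(a + b - Poly_Mapping.single x 1 + c :: dmono) = a + (b - Poly_Mapping.single x 1 + c)"
  by (rule poly_mapping_eqI) (use assms in \<open>auto simp: lookup_add lookup_minus lookup_single when_def\<close>)

lemma of_nat_dconst_zero: "Poly_Mapping.lookup a x = 0 \<Longrightarrow> dconst (of_nat (Poly_Mapping.lookup a x)) * y = 0"
  by simp

lemma mono_der_general:
  fixes g :: "dvar \<Rightarrow> dmono"
  defines "F \<equiv> \<lambda>m. (\<Sum>x\<in>Poly_Mapping.keys m. dconst (of_nat (Poly_Mapping.lookup m x)) *
      dmonom (m - Poly_Mapping.single x 1 + g x))"
  shows "F (a + b) = F a * dmonom b + dmonom a * F b"
proof -
  have sup: "F m = (\<Sum>x\<in>S. dconst (of_nat (Poly_Mapping.lookup m x)) *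
      dmonom (m - Poly_Mapping.single x 1 + g x))" if "finite S" "Poly_Mapping.keys m \<subseteq> S" for m S
    unfolding F_def by (rule sum.mono_neutral_left[OF that]) (auto simp: in_keys_iff)
  let ?S = "Poly_Mapping.keys a \<union> Poly_Mapping.keys b"
  have "F (a + b) = (\<Sum>x\<in>?S. dconst (of_nat (Poly_Mapping.lookup (a+b) x)) *
      dmonom (a + b - Poly_Mapping.single x 1 + g x))"
    by (rule sup) (auto simp: keys_add_nat)
  also have "\<dots> = (\<Sum>x\<in>?S. dconst (of_nat (Poly_Mapping.lookup a x)) *
      dmonom (a - Poly_Mapping.single x 1 + g x) * dmonom b) +
      (\<Sum>x\<in>?S. dmonom a * (dconst (of_nat (Poly_Mapping.lookup b x)) *
      dmonom (b - Poly_Mapping.single x 1 + g x)))"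
  proof (subst sum.distrib[symmetric], rule sum.cong[OF refl])
    fix x
    have 1: "dconst (of_nat (Poly_Mapping.lookup a x)) * dmonom (a + b - Poly_Mapping.single x 1 + g x)
       = dconst (of_nat (Poly_Mapping.lookup a x)) * dmonom (a - Poly_Mapping.single x 1 + g x) * dmonom b"
    proof (cases "Poly_Mapping.lookup a x = 0")
      case False
      then have "a + b - Poly_Mapping.single x 1 + g x = (a - Poly_Mapping.single x 1 + g x) + b"
        by (rule mono_shift)
      then show ?thesis by (simp only: dmonom_add mult.assoc)
    qed simp
    have 2: "dconst (of_nat (Poly_Mapping.lookup b x)) * dmonom (a + b - Poly_Mapping.single x 1 + g x)
       = dmonom a * (dconst (of_nat (Poly_Mapping.lookup b x)) * dmonom (b - Poly_Mapping.single x 1 + g x))"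
    proof (cases "Poly_Mapping.lookup b x = 0")
      case False
      then have "a + b - Poly_Mapping.single x 1 + g x = a + (b - Poly_Mapping.single x 1 + g x)"
        by (rule mono_shift2)
      then show ?thesis by (simp only: dmonom_add mult_ac)
    qed simp
    show "dconst (of_nat (Poly_Mapping.lookup (a + b) x)) * dmonom (a + b - Poly_Mapping.single x 1 + g x) =
      dconst (of_nat (Poly_Mapping.lookup a x)) * dmonom (a - Poly_Mapping.single x 1 + g x) * dmonom b +
      dmonom a * (dconst (of_nat (Poly_Mapping.lookup b x)) * dmonom (b - Poly_Mapping.single x 1 + g x))"
      using 1 2 by (simp add: lookup_add dconst_add distrib_right)
  qed
  also have "\<dots> = F a * dmonom b + dmonom a * F b"
    using sup[of ?S a] sup[of ?S b] by (simp add: sum_distrib_left sum_distrib_right mult_ac)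
  finally show ?thesis .
qed

lemma Dx_lin: "Dx = lin Dmono"
  by (simp add: fun_eq_iff Dx_def lin_def)

lemma Dmono_der: "Dmono (a + b) = Dmono a * dmonom b + dmonom a * Dmono b"
  using mono_der_general[where g="\<lambda>x. Poly_Mapping.single (dsucc x) 1" and a=a and b=b]
  by (simp add: Dmono_def[abs_def])

lemma Dx_add: "Dx (p + q) = Dx p + Dx q" by (simp add: Dx_lin lin_add)
lemma Dx_dconst_mult: "Dx (dconst c * p) = dconst c * Dx p" by (simp add: Dx_lin lin_dconst_mult)
lemma Dx_mult: "Dx (p * q) = Dx p * q + p * Dx q"
  by (simp add: Dx_lin lin_mult_der Dmono_der)
lemma Dx_dconst[simp]: "Dx (dconst c) = 0" by (simp add: Dx_lin lin_dconst Dmono_def)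
lemma Dx_0[simp]: "Dx 0 = 0" by (simp add: Dx_lin)
lemma Dx_1[simp]: "Dx 1 = 0" using Dx_dconst[of 1] by simp
lemma Dx_sum: "Dx (\<Sum>i\<in>I. g i) = (\<Sum>i\<in>I. Dx (g i))" by (simp add: Dx_lin lin_sum)
lemma Dx_uminus: "Dx (- p) = - Dx p" by (simp add: Dx_lin lin_uminus)
lemma Dx_diff: "Dx (p - q) = Dx p - Dx q" by (simp add: Dx_lin lin_diff)
lemma Dx_dvarp[simp]: "Dx (dvarp x) = dvarp (dsucc x)"
  by (simp add: Dx_lin dvarp_def Dmono_def)

definition pmono :: "dvar \<Rightarrow> dmono \<Rightarrow> dpoly" where
  "pmono x m = dconst (of_nat (Poly_Mapping.lookup m x)) * dmonom (m - Poly_Mapping.single x 1)"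

lemma pderiv_lin: "pderiv_d x = lin (pmono x)"
proof
  fix p
  show "pderiv_d x p = lin (pmono x) p"
    unfolding pderiv_d_def lin_def pmono_def
    by (rule sum.cong[OF refl]) (auto simp: dconst_mult in_keys_iff)
qed



lemma pmono_der: "pmono x (a + b) = pmono x a * dmonom b + dmonom a * pmono x b"
proof -
  have A: "Poly_Mapping.lookup a x \<noteq> 0 \<Longrightarrow> dmonom (a + b - Poly_Mapping.single x 1) = dmonom (a - Poly_Mapping.single x 1) * dmonom b"
    using mono_shift[of a x b 0] by (simp add: dmonom_add)
  have B: "Poly_Mapping.lookup b x \<noteq> 0 \<Longrightarrow> dmonom (a + b - Poly_Mapping.single x 1) = dmonom a * dmonom (b - Poly_Mapping.single x 1)"
    using mono_shift2[of b x a 0] by (simp add: dmonom_add)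
  have "pmono x (a + b) = dconst (of_nat (Poly_Mapping.lookup a x)) * dmonom (a + b - Poly_Mapping.single x 1)
     + dconst (of_nat (Poly_Mapping.lookup b x)) * dmonom (a + b - Poly_Mapping.single x 1)"
    by (simp add: pmono_def lookup_add dconst_add distrib_right)
  also have "\<dots> = pmono x a * dmonom b + dmonom a * pmono x b"
  proof (cases "Poly_Mapping.lookup a x = 0 \<or> Poly_Mapping.lookup b x = 0")
    case True then show ?thesis
      by (cases "Poly_Mapping.lookup a x = 0"; cases "Poly_Mapping.lookup b x = 0") (simp_all add: pmono_def A[simplified] B[simplified] mult_ac)
  next
    case False
    then have "dconst (of_nat (Poly_Mapping.lookup a x)) * dmonom (a + b - Poly_Mapping.single x 1)
     + dconst (of_nat (Poly_Mapping.lookup b x)) * dmonom (a + b - Poly_Mapping.single x 1) =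
       dconst (of_nat (Poly_Mapping.lookup a x)) * (dmonom (a - Poly_Mapping.single x 1) * dmonom b)
     + dconst (of_nat (Poly_Mapping.lookup b x)) * (dmonom a * dmonom (b - Poly_Mapping.single x 1))"
      using A B by metis
    then show ?thesis by (simp add: pmono_def mult_ac)
  qed
  finally show ?thesis .
qed

lemma pd_add: "pderiv_d x (p + q) = pderiv_d x p + pderiv_d x q" by (simp add: pderiv_lin lin_add)
lemma pd_dconst_mult: "pderiv_d x (dconst c * p) = dconst c * pderiv_d x p" by (simp add: pderiv_lin lin_dconst_mult)
lemma pd_mult: "pderiv_d x (p * q) = pderiv_d x p * q + p * pderiv_d x q"
  by (simp add: pderiv_lin lin_mult_der pmono_der)
lemma pd_dconst[simp]: "pderiv_d x (dconst c) = 0" by (simp add: pderiv_lin lin_dconst pmono_def)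
lemma pd_0[simp]: "pderiv_d x 0 = 0" by (simp add: pderiv_lin)
lemma pd_1[simp]: "pderiv_d x 1 = 0" using pd_dconst[of x 1] by simp
lemma pd_sum: "pderiv_d x (\<Sum>i\<in>I. g i) = (\<Sum>i\<in>I. pderiv_d x (g i))" by (simp add: pderiv_lin lin_sum)
lemma pd_uminus: "pderiv_d x (- p) = - pderiv_d x p" by (simp add: pderiv_lin lin_uminus)
lemma pd_diff: "pderiv_d x (p - q) = pderiv_d x p - pderiv_d x q" by (simp add: pderiv_lin lin_diff)
lemma pd_dvarp[simp]: "pderiv_d x (dvarp y) = (if y = x then 1 else 0)"
  by (simp add: pderiv_lin dvarp_def pmono_def lookup_single when_def)


lemma dconst_of_nat[simp]: "dconst (of_nat n) = of_nat n"
  by (simp add: dconst_def)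
lemma dconst_numeral[simp]: "dconst (numeral n) = numeral n"
  by (simp add: dconst_def)

definition vars :: "dpoly \<Rightarrow> dvar set" where
  "vars p = (\<Union>m\<in>Poly_Mapping.keys p. Poly_Mapping.keys m)"

lemma finite_vars[simp]: "finite (vars p)"
  by (simp add: vars_def)

lemma dmonom_single: "dmonom (Poly_Mapping.single x e) = dvarp x ^ e"
proof (induction e)
  case 0 then show ?case by simp
next
  case (Suc e)
  have "Poly_Mapping.single x (Suc e) = Poly_Mapping.single x e + Poly_Mapping.single x 1"
    by (simp add: single_add[symmetric])
  then show ?case using Suc by (simp add: dmonom_add dvarp_def)
qed

lemma dmono_rep: "(m::dmono) = (\<Sum>x\<in>Poly_Mapping.keys m. Poly_Mapping.single x (Poly_Mapping.lookup m x))"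
proof (rule poly_mapping_eqI)
  fix k
  have "(\<Sum>x\<in>Poly_Mapping.keys m. Poly_Mapping.lookup (Poly_Mapping.single x (Poly_Mapping.lookup m x)) k)
      = (\<Sum>x\<in>Poly_Mapping.keys m. if x = k then Poly_Mapping.lookup m x else 0)"
    by (rule sum.cong) (auto simp: lookup_single when_def)
  also have "\<dots> = Poly_Mapping.lookup m k" by (simp add: sum.delta' in_keys_iff)
  finally show "Poly_Mapping.lookup m k = Poly_Mapping.lookup (\<Sum>x\<in>Poly_Mapping.keys m. Poly_Mapping.single x (Poly_Mapping.lookup m x)) k"
    by (simp add: lookup_sum)
qed

lemma dmonom_sum: "dmonom (\<Sum>i\<in>I. g i) = (\<Prod>i\<in>I. dmonom (g i))"
  by (induction I rule: infinite_finite_induct) (auto simp: dmonom_add)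

lemma dmonom_prod: "dmonom m = (\<Prod>x\<in>Poly_Mapping.keys m. dvarp x ^ Poly_Mapping.lookup m x)"
  by (subst dmono_rep) (simp add: dmonom_sum dmonom_single)

lemma dpoly_induct_vars:
  fixes P :: "dpoly \<Rightarrow> bool"
  assumes C: "\<And>c. P (dconst c)" and V: "\<And>x. x \<in> V \<Longrightarrow> P (dvarp x)"
    and A: "\<And>a b. P a \<Longrightarrow> P b \<Longrightarrow> P (a + b)" and M: "\<And>a b. P a \<Longrightarrow> P b \<Longrightarrow> P (a * b)"
    and S: "vars p \<subseteq> V"
  shows "P p"
proof -
  have P1: "P 1" using C[of 1] by simp
  have pow: "P (dvarp x ^ n)" if "x \<in> V" for x n
    by (induction n) (auto simp: P1 M V that)
  have prod: "finite X \<Longrightarrow> X \<subseteq> V \<Longrightarrow> P (\<Prod>x\<in>X. dvarp x ^ f x)" for X f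
    by (induction X rule: finite_induct) (auto simp: P1 M pow)
  have mon: "Poly_Mapping.keys m \<subseteq> V \<Longrightarrow> P (dmonom m)" for m
    by (simp add: dmonom_prod prod)
  have sum: "finite K \<Longrightarrow> (\<forall>m\<in>K. Poly_Mapping.keys m \<subseteq> V) \<Longrightarrow> P (\<Sum>m\<in>K. dconst (c m) * dmonom m)" for K c
  proof (induction K rule: finite_induct)
    case empty then show ?case using C[of 0] by simp
  next
    case (insert m K) then show ?case by (auto intro!: A M C mon)
  qed
  have "P (\<Sum>m\<in>Poly_Mapping.keys p. dconst (Poly_Mapping.lookup p m) * dmonom m)"
    by (rule sum) (use S in \<open>auto simp: vars_def\<close>)
  then show ?thesis by (simp flip: poly_rep)
qed

lemmas dpoly_induct = dpoly_induct_vars[where V=UNIV, simplified]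

lemma dsucc_inj[simp]: "dsucc x = dsucc y \<longleftrightarrow> x = y"
  by (cases x; cases y) auto

lemma pd_Dx_succ: "pderiv_d (dsucc x) (Dx p) = Dx (pderiv_d (dsucc x) p) + pderiv_d x p"
  by (induction p rule: dpoly_induct) (auto simp: Dx_add pd_add Dx_mult pd_mult Dx_dconst_mult algebra_simps)

lemma pd_Dx_base:
  assumes "\<And>z. dsucc z \<noteq> y"
  shows "pderiv_d y (Dx p) = Dx (pderiv_d y p)"
  by (induction p rule: dpoly_induct) (use assms in \<open>auto simp: Dx_add pd_add Dx_mult pd_mult algebra_simps\<close>)

lemma pd_Dx_R0: "pderiv_d (Rv 0) (Dx p) = Dx (pderiv_d (Rv 0) p)"
  by (rule pd_Dx_base) (metis dsucc.elims dvar.distinct(1) dvar.inject(2) nat.distinct(1))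
lemma pd_Dx_U0: "pderiv_d (Uv 0) (Dx p) = Dx (pderiv_d (Uv 0) p)"
  by (rule pd_Dx_base) (metis dsucc.elims dvar.distinct(1) dvar.inject(1) nat.distinct(1))
lemma pd_Dx_RS: "pderiv_d (Rv (Suc k)) (Dx p) = Dx (pderiv_d (Rv (Suc k)) p) + pderiv_d (Rv k) p"
  using pd_Dx_succ[of "Rv k"] by simp
lemma pd_Dx_US: "pderiv_d (Uv (Suc k)) (Dx p) = Dx (pderiv_d (Uv (Suc k)) p) + pderiv_d (Uv k) p"
  using pd_Dx_succ[of "Uv k"] by simp

lemma pd_comm: "pderiv_d x (pderiv_d y p) = pderiv_d y (pderiv_d x p)"
  by (induction p rule: dpoly_induct) (auto simp: pd_add pd_mult algebra_simps)

lemma Dx_power: "Dx (p ^ Suc n) = of_nat (Suc n) * p ^ n * Dx p"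
proof (induction n)
  case 0 then show ?case by simp
next
  case (Suc n)
  have "Dx (p ^ Suc (Suc n)) = Dx (p * p ^ Suc n)" by simp
  also have "\<dots> = Dx p * p ^ Suc n + p * (of_nat (Suc n) * p ^ n * Dx p)"
    by (simp only: Dx_mult Suc)
  also have "\<dots> = of_nat (Suc (Suc n)) * p ^ Suc n * Dx p"
    by (simp add: algebra_simps)
  finally show ?case .
qed

lemma dswap_dswap[simp]: "dswap (dswap x) = x" by (cases x) auto
lemma dswap_dsucc: "dswap (dsucc x) = dsucc (dswap x)" by (cases x) auto
lemma dswap_eq_iff: "dswap x = y \<longleftrightarrow> x = dswap y" by (metis dswap_dswap)

lemma lookup_swap_mono: "Poly_Mapping.lookup (swap_mono m) y = Poly_Mapping.lookup m (dswap y)"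
proof -
  have "(\<Sum>x\<in>Poly_Mapping.keys m. Poly_Mapping.lookup (Poly_Mapping.single (dswap x) (Poly_Mapping.lookup m x)) y)
     = (\<Sum>x\<in>Poly_Mapping.keys m. if x = dswap y then Poly_Mapping.lookup m x else 0)"
    by (rule sum.cong) (auto simp: lookup_single when_def dswap_eq_iff)
  also have "\<dots> = Poly_Mapping.lookup m (dswap y)" by (simp add: sum.delta' in_keys_iff)
  finally show ?thesis by (simp add: swap_mono_def lookup_sum)
qed

lemma swap_mono_add: "swap_mono (a + b) = swap_mono a + swap_mono b"
  by (rule poly_mapping_eqI) (simp add: lookup_swap_mono lookup_add)

lemma swap_mono_0[simp]: "swap_mono 0 = 0" by (simp add: swap_mono_def)

lemma swap_mono_single: "swap_mono (Poly_Mapping.single x n) = Poly_Mapping.single (dswap x) n"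
  by (rule poly_mapping_eqI) (auto simp: lookup_swap_mono lookup_single when_def dswap_eq_iff)

definition clin :: "(dmono \<Rightarrow> dpoly) \<Rightarrow> dpoly \<Rightarrow> dpoly" where
  "clin f p = (\<Sum>m\<in>Poly_Mapping.keys p. dconst (cnj (Poly_Mapping.lookup p m)) * f m)"

lemma clin_superset:
  assumes "finite S" "Poly_Mapping.keys p \<subseteq> S"
  shows "clin f p = (\<Sum>m\<in>S. dconst (cnj (Poly_Mapping.lookup p m)) * f m)"
  unfolding clin_def
  by (rule sum.mono_neutral_left[OF assms(1,2)]) (auto simp: in_keys_iff)

lemma clin_add: "clin f (p + q) = clin f p + clin f q"
proof -
  let ?S = "Poly_Mapping.keys p \<union> Poly_Mapping.keys q"
  have "clin f (p + q) = (\<Sum>m\<in>?S. dconst (cnj (Poly_Mapping.lookup (p+q) m)) * f m)"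
    by (rule clin_superset) (auto simp: keys_add)
  also have "\<dots> = (\<Sum>m\<in>?S. dconst (cnj (Poly_Mapping.lookup p m)) * f m) + (\<Sum>m\<in>?S. dconst (cnj (Poly_Mapping.lookup q m)) * f m)"
    by (simp add: lookup_add dconst_add distrib_right sum.distrib)
  also have "\<dots> = clin f p + clin f q"
    using clin_superset[of ?S p f] clin_superset[of ?S q f] by simp
  finally show ?thesis .
qed

lemma clin_dconst_mult: "clin f (dconst c * p) = dconst (cnj c) * clin f p"
proof -
  have "clin f (dconst c * p) = (\<Sum>m\<in>Poly_Mapping.keys p. dconst (cnj (Poly_Mapping.lookup (dconst c * p) m)) * f m)"
    by (rule clin_superset) (auto simp: in_keys_iff lookup_dconst_mult)
  also have "\<dots> = dconst (cnj c) * clin f p"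
    by (simp add: clin_def lookup_dconst_mult dconst_mult sum_distrib_left mult.assoc)
  finally show ?thesis .
qed

lemma clin_zero[simp]: "clin f 0 = 0" by (simp add: clin_def)
lemma clin_dmonom[simp]: "clin f (dmonom m) = f m" by (simp add: clin_def lookup_dmonom)
lemma clin_one: "clin f 1 = f 0" by (metis clin_dmonom dmonom_0)
lemma clin_sum: "clin f (\<Sum>i\<in>I. g i) = (\<Sum>i\<in>I. clin f (g i))"
  by (induction I rule: infinite_finite_induct) (auto simp: clin_add)

lemma clin_mult_hom:
  assumes "\<And>a b. f (a + b) = f a * f b"
  shows "clin f (p * q) = clin f p * clin f q"
proof -
  have "clin f (p * q) = (\<Sum>a\<in>Poly_Mapping.keys p. \<Sum>b\<in>Poly_Mapping.keys q.
      dconst (cnj (Poly_Mapping.lookup p a * Poly_Mapping.lookup q b)) * f (a + b))"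
    by (subst mult_rep) (simp add: clin_sum clin_dconst_mult)
  also have "\<dots> = (\<Sum>a\<in>Poly_Mapping.keys p. \<Sum>b\<in>Poly_Mapping.keys q.
      dconst (cnj (Poly_Mapping.lookup p a)) * f a * (dconst (cnj (Poly_Mapping.lookup q b)) * f b))"
    by (simp add: assms dconst_mult mult_ac)
  also have "\<dots> = clin f p * clin f q"
    by (simp add: clin_def sum_product)
  finally show ?thesis .
qed

lemma conj_clin: "conj_d = clin (\<lambda>m. dmonom (swap_mono m))"
  by (simp add: fun_eq_iff conj_d_def clin_def)

lemma conj_add: "conj_d (p + q) = conj_d p + conj_d q" by (simp add: conj_clin clin_add)
lemma conj_dconst_mult: "conj_d (dconst c * p) = dconst (cnj c) * conj_d p" by (simp add: conj_clin clin_dconst_mult)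
lemma conj_mult: "conj_d (p * q) = conj_d p * conj_d q"
  by (simp add: conj_clin clin_mult_hom swap_mono_add dmonom_add)
lemma conj_dconst[simp]: "conj_d (dconst c) = dconst (cnj c)"
  using conj_dconst_mult[of c 1] by (simp add: conj_clin clin_one)
lemma conj_0[simp]: "conj_d 0 = 0" by (simp add: conj_clin)
lemma conj_1[simp]: "conj_d 1 = 1" using conj_dconst[of 1] by simp
lemma conj_sum: "conj_d (\<Sum>i\<in>I. g i) = (\<Sum>i\<in>I. conj_d (g i))" by (simp add: conj_clin clin_sum)
lemma conj_uminus: "conj_d (- p) = - conj_d p"
  using conj_dconst_mult[of "-1" p] by (simp add: dconst_uminus)
lemma conj_diff: "conj_d (p - q) = conj_d p - conj_d q"
  using conj_add[of p "-q"] by (simp add: conj_uminus)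
lemma conj_dvarp[simp]: "conj_d (dvarp x) = dvarp (dswap x)"
  by (simp add: conj_clin dvarp_def swap_mono_single)
lemma conj_power: "conj_d (p ^ n) = conj_d p ^ n"
  by (induction n) (auto simp: conj_mult)

lemma conj_Dx: "conj_d (Dx p) = Dx (conj_d p)"
  by (induction p rule: dpoly_induct) (auto simp: Dx_add conj_add Dx_mult conj_mult dswap_dsucc)

lemma conj_pd: "conj_d (pderiv_d x p) = pderiv_d (dswap x) (conj_d p)"
  by (induction p rule: dpoly_induct) (auto simp: pd_add conj_add pd_mult conj_mult dswap_eq_iff)

definition rmono :: "(dvar \<Rightarrow> bool) \<Rightarrow> dmono \<Rightarrow> dpoly" where
  "rmono T m = (if \<forall>x\<in>Poly_Mapping.keys m. T x then dmonom m else 0)"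

definition restr :: "(dvar \<Rightarrow> bool) \<Rightarrow> dpoly \<Rightarrow> dpoly" where
  "restr T = lin (rmono T)"

lemma rmono_hom: "rmono T (a + b) = rmono T a * rmono T b"
  by (auto simp: rmono_def keys_add_nat dmonom_add)

lemma restr_add: "restr T (p + q) = restr T p + restr T q" by (simp add: restr_def lin_add)
lemma restr_dconst_mult: "restr T (dconst c * p) = dconst c * restr T p" by (simp add: restr_def lin_dconst_mult)
lemma restr_mult: "restr T (p * q) = restr T p * restr T q" by (simp add: restr_def lin_mult_hom rmono_hom)
lemma restr_dconst[simp]: "restr T (dconst c) = dconst c" by (simp add: restr_def lin_dconst rmono_def)
lemma restr_0[simp]: "restr T 0 = 0" by (simp add: restr_def)
lemma restr_1[simp]: "restr T 1 = 1" using restr_dconst[of T 1] by simp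
lemma restr_sum: "restr T (\<Sum>i\<in>I. g i) = (\<Sum>i\<in>I. restr T (g i))" by (simp add: restr_def lin_sum)
lemma restr_uminus: "restr T (- p) = - restr T p" by (simp add: restr_def lin_uminus)
lemma restr_diff: "restr T (p - q) = restr T p - restr T q" by (simp add: restr_def lin_diff)
lemma restr_dvarp[simp]: "restr T (dvarp x) = (if T x then dvarp x else 0)"
  by (simp add: restr_def rmono_def dvarp_def)
lemma restr_power: "restr T (p ^ n) = restr T p ^ n"
  by (induction n) (auto simp: restr_mult)

lemma lookup_restr: "Poly_Mapping.lookup (restr T p) m =
   (if \<forall>x\<in>Poly_Mapping.keys m. T x then Poly_Mapping.lookup p m else 0)"
proof -
  have "Poly_Mapping.lookup (restr T p) m = (\<Sum>m'\<in>Poly_Mapping.keys p. Poly_Mapping.lookup (dconst (Poly_Mapping.lookup p m') * rmono T m') m)"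
    by (simp add: restr_def lin_def lookup_sum)
  also have "\<dots> = (\<Sum>m'\<in>Poly_Mapping.keys p. if m' = m then (if \<forall>x\<in>Poly_Mapping.keys m. T x then Poly_Mapping.lookup p m else 0) else 0)"
    by (rule sum.cong) (auto simp: rmono_def lookup_dconst_mult lookup_dmonom)
  also have "\<dots> = (if \<forall>x\<in>Poly_Mapping.keys m. T x then Poly_Mapping.lookup p m else 0)"
    by (simp add: sum.delta in_keys_iff)
  finally show ?thesis .
qed

definition isU :: "dvar \<Rightarrow> bool" where "isU x = (case x of Uv _ \<Rightarrow> True | Rv _ \<Rightarrow> False)"
definition isR :: "dvar \<Rightarrow> bool" where "isR x = (case x of Uv _ \<Rightarrow> False | Rv _ \<Rightarrow> True)"

lemma isU_simps[simp]: "isU (Uv k)" "\<not> isU (Rv k)" by (auto simp: isU_def)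
lemma isR_simps[simp]: "isR (Rv k)" "\<not> isR (Uv k)" by (auto simp: isR_def)
lemma isU_dsucc[simp]: "isU (dsucc x) = isU x" by (cases x) auto
lemma isR_dsucc[simp]: "isR (dsucc x) = isR x" by (cases x) auto
lemma isU_dswap[simp]: "isU (dswap x) = isR x" by (cases x) auto

lemma restr_Dx:
  assumes "\<And>x. T (dsucc x) = T x"
  shows "restr T (Dx p) = Dx (restr T p)"
  by (induction p rule: dpoly_induct) (auto simp: Dx_add restr_add Dx_mult restr_mult assms)

lemma restrU_Dx: "restr isU (Dx p) = Dx (restr isU p)" by (rule restr_Dx) simp
lemma restrR_Dx: "restr isR (Dx p) = Dx (restr isR p)" by (rule restr_Dx) simp

lemma conj_restrR: "conj_d (restr isR p) = restr isU (conj_d p)"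
  by (induction p rule: dpoly_induct) (auto simp: restr_add conj_add restr_mult conj_mult)


definition cI :: complex where "cI = 1 / (2 * \<i>)"

lemma Yd_0': "Yd 0 = - dconst cI * rd" by (simp add: cI_def)
lemma Yd_Suc': "Yd (Suc n) = dconst cI * (Dx (Yd n) + qd * (\<Sum>k\<in>{..n}. Yd (n - k) * Yd k))"
  by (simp add: cI_def)
declare Yd.simps[simp del]
lemmas Yd_simps' = Yd_0' Yd_Suc'
declare Yd_simps'[simp]

lemma dconst_numeral_mult[simp]: "numeral w * dconst x = dconst (numeral w * x)"
  by (simp add: dconst_mult)
lemma dconst_of_nat_mult[simp]: "of_nat w * dconst x = dconst (of_nat w * x)"
  by (simp add: dconst_mult)
lemma dconst_double: "dconst x + dconst x = dconst (2 * x)"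
  by (simp add: dconst_add[symmetric])
abbreviation U :: "nat \<Rightarrow> dpoly" where "U k \<equiv> dvarp (Uv k)"
abbreviation R :: "nat \<Rightarrow> dpoly" where "R k \<equiv> dvarp (Rv k)"

lemma restr_pd_Dx: "restr T (pderiv_d (Rv k) (Dx p)) =
   restr T (Dx (pderiv_d (Rv k) p)) + (if k = 0 then 0 else restr T (pderiv_d (Rv (k - 1)) p))"
  by (cases k) (simp_all add: pd_Dx_R0 pd_Dx_RS restr_add)

lemma Y1: "restr isU (Yd n) = 0"
proof (induction n rule: less_induct)
  case (less n)
  show ?case
  proof (cases n)
    case 0 then show ?thesis by (simp add: restr_mult restr_uminus)
  next
    case (Suc m)
    then have IH: "\<And>i. i \<le> m \<Longrightarrow> restr isU (Yd i) = 0" using less by auto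
    have "(\<Sum>k\<le>m. restr isU (Yd (m - k)) * restr isU (Yd k)) = 0"
      by (rule sum.neutral) (auto simp: IH)
    then show ?thesis using Suc by (simp add: restr_mult restr_add restr_sum restrU_Dx IH)
  qed
qed

lemma pd_prod_sum_zero:
  "restr isU (pderiv_d x (\<Sum>i\<in>{..n}. Yd (n - i) * Yd i)) = 0"
  by (simp add: pd_sum pd_mult restr_sum restr_add restr_mult Y1)

lemma Y2: "restr isU (pderiv_d (Rv k) (Yd n)) = (if k = n then dconst (- (cI ^ Suc n)) else 0)"
proof (induction n arbitrary: k)
  case 0
  then show ?case by (simp add: pd_mult pd_uminus restr_mult restr_uminus dconst_uminus)
next
  case (Suc n)
  have "restr isU (pderiv_d (Rv k) (Yd (Suc n))) =
     dconst cI * restr isU (pderiv_d (Rv k) (Dx (Yd n)))"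
    by (simp add: pd_mult pd_add restr_mult restr_add pd_prod_sum_zero)
  also have "\<dots> = (if k = Suc n then dconst (- (cI ^ Suc (Suc n))) else 0)"
    by (auto simp add: restr_pd_Dx restrU_Dx Suc.IH dconst_mult[symmetric])
  finally show ?case .
qed

lemma pd2_mult_Y: "restr isU (pderiv_d x (pderiv_d y (Yd a * Yd b))) =
   restr isU (pderiv_d y (Yd a)) * restr isU (pderiv_d x (Yd b)) + restr isU (pderiv_d x (Yd a)) * restr isU (pderiv_d y (Yd b))"
  by (simp add: pd_mult pd_add restr_add restr_mult Y1 algebra_simps)

lemma pd2_prod_sum: "restr isU (pderiv_d (Rv 0) (pderiv_d (Rv k) (\<Sum>i\<in>{..n}. Yd (n - i) * Yd i))) =
   (if k = n then dconst (2 * cI ^ (n + 2)) else 0)"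
proof -
  have "restr isU (pderiv_d (Rv 0) (pderiv_d (Rv k) (\<Sum>i\<in>{..n}. Yd (n - i) * Yd i))) =
     (\<Sum>i\<in>{..n}. (if i = 0 then (if k = n then dconst (cI ^ (n + 2)) else 0) else 0)) +
     (\<Sum>i\<in>{..n}. (if i = n then (if k = n then dconst (cI ^ (n + 2)) else 0) else 0))"
    unfolding pd_sum restr_sum pd2_mult_Y sum.distrib[symmetric]
  proof (rule sum.cong[OF refl])
    fix i assume "i \<in> {..n}"
    then have i: "i \<le> n" by simp
    have "Suc (n - i) + Suc i = n + 2" using i by simp
    then have e: "cI ^ Suc (n - i) * cI ^ Suc i = cI ^ (n + 2)"
      by (metis power_add)
    show "restr isU (pderiv_d (Rv k) (Yd (n - i))) * restr isU (pderiv_d (Rv 0) (Yd i)) +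
        restr isU (pderiv_d (Rv 0) (Yd (n - i))) * restr isU (pderiv_d (Rv k) (Yd i)) =
        (if i = 0 then if k = n then dconst (cI ^ (n + 2)) else 0 else 0) +
        (if i = n then if k = n then dconst (cI ^ (n + 2)) else 0 else 0)"
      using i e by (auto simp: Y2 dconst_mult[symmetric] mult_ac)
  qed
  also have "\<dots> = (if k = n then dconst (2 * cI ^ (n + 2)) else 0)"
    by (simp add: sum.delta dconst_double)
  finally show ?thesis .
qed

lemma Dx_cU[simp]: "Dx (dconst c * U m) = dconst c * U (Suc m)"
  by (simp add: Dx_dconst_mult)

lemma pd0_pdk_Dx: "restr isU (pderiv_d (Rv 0) (pderiv_d (Rv k) (Dx p))) =
   Dx (restr isU (pderiv_d (Rv 0) (pderiv_d (Rv k) p))) + (if k = 0 then 0 else restr isU (pderiv_d (Rv 0) (pderiv_d (Rv (k - 1)) p)))"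
  by (cases k) (simp_all add: pd_Dx_R0 pd_Dx_RS pd_add restr_add restrU_Dx)

lemma Y3: "restr isU (pderiv_d (Rv 0) (pderiv_d (Rv k) (Yd n))) =
  (if k < n then dconst (2 * cI ^ (n + 2) * of_nat (n choose k)) * U (n - 1 - k) else 0)"
proof (induction n arbitrary: k)
  case 0
  then show ?case by (simp add: pd_mult pd_uminus)
next
  case (Suc n)
  define A where "A = 2 * cI ^ (n + 2)"
  have "restr isU (pderiv_d (Rv 0) (pderiv_d (Rv k) (Yd (Suc n)))) =
     dconst cI * (restr isU (pderiv_d (Rv 0) (pderiv_d (Rv k) (Dx (Yd n)))) + U 0 * (if k = n then dconst (2 * cI ^ (n + 2)) else 0))"
    by (simp add: pd_mult pd_add restr_mult restr_add pd2_prod_sum)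
  also have "\<dots> = dconst cI * ((if k < n then dconst (A * of_nat (n choose k)) * U (n - k) else 0)
      + (if k = 0 then 0 else if k - 1 < n then dconst (A * of_nat (n choose (k - 1))) * U (n - k) else 0)
      + U 0 * (if k = n then dconst A else 0))"
    unfolding pd0_pdk_Dx Suc.IH A_def by (cases k) (auto simp: Suc_diff_Suc)
  also have "\<dots> = (if k < Suc n then dconst (2 * cI ^ (Suc n + 2) * of_nat (Suc n choose k)) * U (Suc n - 1 - k) else 0)"
  proof -
    have cA: "cI * A = 2 * cI ^ (Suc n + 2)" by (simp add: A_def)
    consider "k > n" | "k = n" | "k < n" by arith
    then show ?thesis
    proof cases
      case 1 then show ?thesis by auto
    next
      case 2
      show ?thesis
      proof (cases n)
        case 0
        have "dconst cI * (U 0 * dconst A) = dconst (cI * A) * U 0" by (simp add: dconst_mult mult_ac)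
        with 2 0 show ?thesis using cA by simp
      next
        case (Suc m)
        with 2 have "dconst cI * ((if k = 0 then 0 else if k - 1 < n then dconst (A * of_nat (n choose (k - 1))) * U (n - k) else 0)
          + U 0 * (if k = n then dconst A else 0)) = dconst (cI * (A * of_nat n + A)) * U 0"
          by (simp add: dconst_mult dconst_add algebra_simps)
        also have "cI * (A * of_nat n + A) = 2 * cI ^ (Suc n + 2) * of_nat (Suc n choose k)"
          using 2 by (simp add: A_def algebra_simps)
        finally show ?thesis using 2 by simp
      qed
    next
      case 3
      show ?thesis
      proof (cases k)
        case 0
        have "dconst cI * (dconst A * U n) = dconst (cI * A) * U n" by (simp add: dconst_mult mult_ac)
        with 3 0 show ?thesis using cA by simp
      next
        case (Suc k')
        with 3 have "dconst cI * ((if k < n then dconst (A * of_nat (n choose k)) * U (n - k) else 0)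
          + (if k = 0 then 0 else if k - 1 < n then dconst (A * of_nat (n choose (k - 1))) * U (n - k) else 0)
          + U 0 * (if k = n then dconst A else 0)) =
          dconst (cI * (A * of_nat (n choose k) + A * of_nat (n choose k'))) * U (n - k)"
          by (simp add: dconst_mult dconst_add algebra_simps)
        also have "cI * (A * of_nat (n choose k) + A * of_nat (n choose k')) = 2 * cI ^ (Suc n + 2) * of_nat (Suc n choose k)"
          using Suc by (simp add: A_def algebra_simps)
        finally show ?thesis using 3 by (simp add: Suc_diff_Suc)
      qed
    qed
  qed
  finally show ?case .
qed


lemma Dxp_0[simp]: "(Dx ^^ k) 0 = 0" by (induction k) auto
lemma Dxp_add: "(Dx ^^ k) (p + q) = (Dx ^^ k) p + (Dx ^^ k) q" by (induction k) (auto simp: Dx_add)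
lemma Dxp_dconst_mult: "(Dx ^^ k) (dconst c * p) = dconst c * (Dx ^^ k) p" by (induction k) (auto simp: Dx_dconst_mult)
lemma Dxp_sum: "(Dx ^^ k) (\<Sum>i\<in>I. g i) = (\<Sum>i\<in>I. (Dx ^^ k) (g i))"
  by (induction I rule: infinite_finite_induct) (auto simp: Dxp_add)
lemma Dxp_uminus: "(Dx ^^ k) (- p) = - (Dx ^^ k) p" by (induction k) (auto simp: Dx_uminus)
lemma Dxp_diff: "(Dx ^^ k) (p - q) = (Dx ^^ k) p - (Dx ^^ k) q" by (induction k) (auto simp: Dx_diff)
lemma Dxp_U[simp]: "(Dx ^^ k) (U m) = U (m + k)" by (induction k) auto
lemma Dxp_R[simp]: "(Dx ^^ k) (R m) = R (m + k)" by (induction k) auto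
lemma Dxp_restrU: "restr isU ((Dx ^^ k) p) = (Dx ^^ k) (restr isU p)" by (induction k) (auto simp: restrU_Dx)
lemma Dxp_restrR: "restr isR ((Dx ^^ k) p) = (Dx ^^ k) (restr isR p)" by (induction k) (auto simp: restrR_Dx)
lemma Dxp_pdR0: "pderiv_d (Rv 0) ((Dx ^^ k) p) = (Dx ^^ k) (pderiv_d (Rv 0) p)" by (induction k) (auto simp: pd_Dx_R0)
lemma Dxp_pdU0: "pderiv_d (Uv 0) ((Dx ^^ k) p) = (Dx ^^ k) (pderiv_d (Uv 0) p)" by (induction k) (auto simp: pd_Dx_U0)
lemma Dxp_conj: "conj_d ((Dx ^^ k) p) = (Dx ^^ k) (conj_d p)" by (induction k) (auto simp: conj_Dx)
lemma Dxp_Suc': "(Dx ^^ Suc k) p = (Dx ^^ k) (Dx p)" by (simp add: funpow_Suc_right del: funpow.simps)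
lemma Dxp_dconst: "k > 0 \<Longrightarrow> (Dx ^^ k) (dconst c) = 0"
  by (cases k) (simp_all only: Dxp_Suc' Dx_dconst Dxp_0)
lemma Dx_of_nat[simp]: "Dx (of_nat n) = 0"
  using Dx_dconst[of "of_nat n"] by simp
lemma pd_of_nat[simp]: "pderiv_d x (of_nat n) = 0"
  using pd_dconst[of x "of_nat n"] by simp
lemma Dx_of_nat_mult[simp]: "Dx (of_nat n * p) = of_nat n * Dx p"
  using Dx_dconst_mult[of "of_nat n" p] by simp
lemma pd_of_nat_mult[simp]: "pderiv_d x (of_nat n * p) = of_nat n * pderiv_d x p"
  using pd_dconst_mult[of x "of_nat n" p] by simp
lemma restr_of_nat_mult[simp]: "restr T (of_nat n * p) = of_nat n * restr T p"
  using restr_dconst_mult[of T "of_nat n" p] by simp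
lemma Dxp_of_nat_mult[simp]: "(Dx ^^ k) (of_nat n * p) = of_nat n * (Dx ^^ k) p"
  using Dxp_dconst_mult[of k "of_nat n" p] by simp

lemma Leibniz_UU: "(Dx ^^ n) (U a * U b) = (\<Sum>i\<le>n. of_nat (n choose i) * (U (a + i) * U (b + n - i)))"
proof (induction n)
  case 0 then show ?case by simp
next
  case (Suc n)
  define f where "f i = U (a + i) * U (b + Suc n - i)" for i
  have "(Dx ^^ Suc n) (U a * U b) = (\<Sum>i\<le>n. of_nat (n choose i) * (U (a + Suc i) * U (b + n - i)))
       + (\<Sum>i\<le>n. of_nat (n choose i) * (U (a + i) * U (Suc (b + n - i))))"
    by (simp add: Suc Dx_sum Dx_mult algebra_simps sum.distrib)
  also have "(\<Sum>i\<le>n. of_nat (n choose i) * (U (a + i) * U (Suc (b + n - i)))) =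
      (\<Sum>i\<le>Suc n. of_nat (n choose i) * f i)"
    by (auto simp: f_def Suc_diff_le binomial_eq_0 intro!: sum.cong)
  also have "(\<Sum>i\<le>n. of_nat (n choose i) * (U (a + Suc i) * U (b + n - i))) =
      (\<Sum>i\<le>Suc n. (if i = 0 then 0 else of_nat (n choose (i - 1))) * f i)"
    by (subst sum.atMost_Suc_shift) (simp add: f_def)
  also have "(\<Sum>i\<le>Suc n. (if i = 0 then 0 else of_nat (n choose (i - 1))) * f i) + (\<Sum>i\<le>Suc n. of_nat (n choose i) * f i)
     = (\<Sum>i\<le>Suc n. of_nat (Suc n choose i) * f i)"
  proof (subst sum.distrib[symmetric], rule sum.cong[OF refl])
    fix i show "(if i = 0 then 0 else of_nat (n choose (i - 1))) * f i + of_nat (n choose i) * f i = of_nat (Suc n choose i) * f i"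
      by (cases i) (simp_all add: algebra_simps)
  qed
  finally show ?case by (simp add: f_def)
qed

lemma lookup_of_nat_mult: "Poly_Mapping.lookup (of_nat n * (p::dpoly)) m = of_nat n * Poly_Mapping.lookup p m"
  using lookup_dconst_mult[of "of_nat n" p m] by simp

lemma lookup_dvarp_dvarp: "Poly_Mapping.lookup (dvarp x * dvarp y) m =
   (if m = Poly_Mapping.single x 1 + Poly_Mapping.single y 1 then 1 else 0)"
  by (simp add: dvarp_def dmonom_add[symmetric] lookup_dmonom)

lemma two_singles_eq:
  assumes "z \<noteq> w"
  shows "(Poly_Mapping.single z 1 + Poly_Mapping.single w 1 = (Poly_Mapping.single x 1 + Poly_Mapping.single y 1 :: dmono))
     \<longleftrightarrow> (x = z \<and> y = w) \<or> (x = w \<and> y = z)"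
proof
  assume H: "Poly_Mapping.single z 1 + Poly_Mapping.single w 1 = (Poly_Mapping.single x 1 + Poly_Mapping.single y 1 :: dmono)"
  have E: "\<And>v. Poly_Mapping.lookup (Poly_Mapping.single z 1 + Poly_Mapping.single w 1 :: dmono) v =
        Poly_Mapping.lookup (Poly_Mapping.single x 1 + Poly_Mapping.single y 1 :: dmono) v"
    using H by simp
  from E[of z] E[of w] assms show "(x = z \<and> y = w) \<or> (x = w \<and> y = z)"
    by (auto simp: lookup_add lookup_single when_def split: if_splits)
next
  assume "(x = z \<and> y = w) \<or> (x = w \<and> y = z)"
  then show "Poly_Mapping.single z 1 + Poly_Mapping.single w 1 = (Poly_Mapping.single x 1 + Poly_Mapping.single y 1 :: dmono)"
    by (auto simp: add.commute)
qed

lemma lookup_UU: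
  assumes "a \<noteq> b"
  shows "Poly_Mapping.lookup (U i * U k) (Poly_Mapping.single (Uv a) 1 + Poly_Mapping.single (Uv b) 1) =
     (if (i = a \<and> k = b) \<or> (i = b \<and> k = a) then 1 else 0)"
  using two_singles_eq[of "Uv a" "Uv b" "Uv i" "Uv k"] assms
  by (simp add: lookup_dvarp_dvarp)

lemma sum_choose_delta: "(\<Sum>i\<le>n. (of_nat (n choose i) :: complex) * (if i = a then 1 else 0)) = of_nat (n choose a)"
proof -
  have "(\<Sum>i\<le>n. (of_nat (n choose i) :: complex) * (if i = a then 1 else 0)) = (\<Sum>i\<le>n. if i = a then of_nat (n choose i) else 0)"
    by (rule sum.cong) auto
  also have "\<dots> = (if a \<le> n then of_nat (n choose a) else 0)" by (simp add: sum.delta)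
  also have "\<dots> = of_nat (n choose a)" by (simp add: binomial_eq_0)
  finally show ?thesis .
qed

lemma lookup_Leib:
  assumes "a \<noteq> b" "a + b = t + n"
  shows "Poly_Mapping.lookup ((Dx ^^ n) (U 0 * U t)) (Poly_Mapping.single (Uv a) 1 + Poly_Mapping.single (Uv b) 1) =
     of_nat (n choose a) + of_nat (n choose b)"
proof -
  have "Poly_Mapping.lookup ((Dx ^^ n) (U 0 * U t)) (Poly_Mapping.single (Uv a) 1 + Poly_Mapping.single (Uv b) 1) =
    (\<Sum>i\<le>n. of_nat (n choose i) * (if i = a then 1 else 0)) + (\<Sum>i\<le>n. of_nat (n choose i) * (if i = b then 1 else 0))"
    unfolding Leibniz_UU lookup_sum sum.distrib[symmetric]
  proof (rule sum.cong[OF refl])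
    fix i assume "i \<in> {..n}"
    have "((i = a \<and> t + n - i = b) \<or> (i = b \<and> t + n - i = a)) \<longleftrightarrow> (i = a \<or> i = b)"
      using assms by auto
    then show "Poly_Mapping.lookup (of_nat (n choose i) * (U (0 + i) * U (t + n - i))) (Poly_Mapping.single (Uv a) 1 + Poly_Mapping.single (Uv b) 1) =
      of_nat (n choose i) * (if i = a then 1 else 0) + of_nat (n choose i) * (if i = b then 1 else 0)"
      using assms(1) by (auto simp: lookup_of_nat_mult lookup_UU[OF assms(1), simplified])
  qed
  also have "\<dots> = of_nat (n choose a) + of_nat (n choose b)"
    by (simp only: sum_choose_delta)
  finally show ?thesis .
qed

lemma lookup_pd: "Poly_Mapping.lookup (pderiv_d x p) m =
   of_nat (Poly_Mapping.lookup m x + 1) * Poly_Mapping.lookup p (m + Poly_Mapping.single x 1)"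
proof -
  have "Poly_Mapping.lookup (pderiv_d x p) m = (\<Sum>m'\<in>Poly_Mapping.keys p. Poly_Mapping.lookup (dconst (Poly_Mapping.lookup p m') * pmono x m') m)"
    by (simp add: pderiv_lin lin_def lookup_sum)
  also have "\<dots> = (\<Sum>m'\<in>Poly_Mapping.keys p. if m' = m + Poly_Mapping.single x 1 then
       of_nat (Poly_Mapping.lookup m x + 1) * Poly_Mapping.lookup p (m + Poly_Mapping.single x 1) else 0)"
  proof (rule sum.cong[OF refl])
    fix m'
    show "Poly_Mapping.lookup (dconst (Poly_Mapping.lookup p m') * pmono x m') m = (if m' = m + Poly_Mapping.single x 1 then
       of_nat (Poly_Mapping.lookup m x + 1) * Poly_Mapping.lookup p (m + Poly_Mapping.single x 1) else 0)"
    proof (cases "Poly_Mapping.lookup m' x = 0")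
      case True
      then have "m' \<noteq> m + Poly_Mapping.single x 1" by (auto simp: lookup_add)
      with True show ?thesis by (simp add: pmono_def lookup_dconst_mult lookup_of_nat_mult)
    next
      case False
      have "(m = m' - Poly_Mapping.single x 1) \<longleftrightarrow> (m' = m + Poly_Mapping.single x 1)"
      proof
        assume "m = m' - Poly_Mapping.single x 1"
        then show "m' = m + Poly_Mapping.single x 1"
          using False by (auto intro!: poly_mapping_eqI simp: lookup_add lookup_minus lookup_single when_def)
      next
        assume "m' = m + Poly_Mapping.single x 1"
        then show "m = m' - Poly_Mapping.single x 1"
          by (auto intro!: poly_mapping_eqI simp: lookup_add lookup_minus lookup_single when_def)
      qed
      note iff = this
      show ?thesis
      proof (cases "m' = m + Poly_Mapping.single x 1")
        case True
        then have "m = m' - Poly_Mapping.single x 1" using iff by simp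
        then show ?thesis using True by (simp add: pmono_def lookup_dconst_mult lookup_of_nat_mult lookup_dmonom lookup_add)
      next
        case False
        then have "m \<noteq> m' - Poly_Mapping.single x 1" using iff by simp
        then show ?thesis using False by (simp add: pmono_def lookup_dconst_mult lookup_of_nat_mult lookup_dmonom)
      qed
    qed
  qed
  also have "\<dots> = of_nat (Poly_Mapping.lookup m x + 1) * Poly_Mapping.lookup p (m + Poly_Mapping.single x 1)"
    by (simp add: sum.delta' in_keys_iff)
  finally show ?thesis .
qed

lemma coeff_bridge:
  fixes a b :: nat
  shows "Poly_Mapping.lookup p (Poly_Mapping.single (Uv a) 1 + Poly_Mapping.single (Rv 0) 1 + Poly_Mapping.single (Uv b) 1) =
    Poly_Mapping.lookup (restr isU (pderiv_d (Rv 0) p)) (Poly_Mapping.single (Uv a) 1 + Poly_Mapping.single (Uv b) 1)"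
proof -
  have k: "\<forall>x\<in>Poly_Mapping.keys (Poly_Mapping.single (Uv a) 1 + Poly_Mapping.single (Uv b) 1 :: dmono). isU x"
    by (auto simp: keys_add_nat)
  have "Poly_Mapping.single (Uv a) 1 + Poly_Mapping.single (Rv 0) 1 + Poly_Mapping.single (Uv b) 1 =
       (Poly_Mapping.single (Uv a) 1 + Poly_Mapping.single (Uv b) 1 :: dmono) + Poly_Mapping.single (Rv 0) 1"
    by (simp add: add_ac)
  moreover have "Poly_Mapping.lookup (Poly_Mapping.single (Uv a) 1 + Poly_Mapping.single (Uv b) 1 :: dmono) (Rv 0) = 0"
    by (simp add: lookup_add lookup_single)
  ultimately show ?thesis using k by (simp add: lookup_restr lookup_pd)
qed


lemma T_alt: "(\<Sum>k\<le>N. (-1::int)^k * of_nat (N choose k) * of_nat (k choose a)) = (if a = N then (-1)^N else 0)"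
proof (induction N arbitrary: a)
  case 0 then show ?case by simp
next
  case (Suc N)
  have split: "(\<Sum>k\<le>Suc N. (-1::int)^k * of_nat (Suc N choose k) * of_nat (k choose a)) =
     (\<Sum>k\<le>Suc N. (-1::int)^k * of_nat (N choose k) * of_nat (k choose a)) +
     (\<Sum>k\<le>Suc N. (-1::int)^k * (if k = 0 then 0 else of_nat (N choose (k - 1))) * of_nat (k choose a))"
  proof (subst sum.distrib[symmetric], rule sum.cong[OF refl])
    fix k show "(-1::int)^k * of_nat (Suc N choose k) * of_nat (k choose a) =
      (-1::int)^k * of_nat (N choose k) * of_nat (k choose a) + (-1::int)^k * (if k = 0 then 0 else of_nat (N choose (k - 1))) * of_nat (k choose a)"
      by (cases k) (simp_all add: algebra_simps)
  qed
  have first: "(\<Sum>k\<le>Suc N. (-1::int)^k * of_nat (N choose k) * of_nat (k choose a)) =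
      (\<Sum>k\<le>N. (-1::int)^k * of_nat (N choose k) * of_nat (k choose a))"
    by (simp add: binomial_eq_0)
  have second: "(\<Sum>k\<le>Suc N. (-1::int)^k * (if k = 0 then 0 else of_nat (N choose (k - 1))) * of_nat (k choose a)) =
      - (\<Sum>k\<le>N. (-1::int)^k * of_nat (N choose k) * of_nat (Suc k choose a))"
    by (subst sum.atMost_Suc_shift) (simp add: sum_negf[symmetric])
  have eq: "(\<Sum>k\<le>Suc N. (-1::int)^k * of_nat (Suc N choose k) * of_nat (k choose a)) =
     (\<Sum>k\<le>N. (-1::int)^k * of_nat (N choose k) * of_nat (k choose a)) -
     (\<Sum>k\<le>N. (-1::int)^k * of_nat (N choose k) * of_nat (Suc k choose a))"
    unfolding split first second by simp
  show ?case
  proof (cases a)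
    case 0
    have "(\<Sum>k\<le>N. (-1::int)^k * of_nat (N choose k) * of_nat (Suc k choose a)) =
       (\<Sum>k\<le>N. (-1::int)^k * of_nat (N choose k) * of_nat (k choose a))"
      using 0 by simp
    then show ?thesis using eq 0 by simp
  next
    case (Suc a')
    have "(\<Sum>k\<le>N. (-1::int)^k * of_nat (N choose k) * of_nat (Suc k choose a)) =
       (\<Sum>k\<le>N. (-1::int)^k * of_nat (N choose k) * of_nat (k choose a')) +
       (\<Sum>k\<le>N. (-1::int)^k * of_nat (N choose k) * of_nat (k choose a))"
      using Suc by (simp add: sum.distrib[symmetric] algebra_simps)
    then show ?thesis using Suc.IH[of a'] Suc.IH[of a] Suc eq by simp
  qed
qed

lemma S_alt:
  assumes "a \<le> N" "odd N"
  shows "(\<Sum>k<N. (-1::int)^k * of_nat (N choose k) * of_nat (Suc k choose a)) =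
     of_nat (Suc N choose a) - (if a = N then 1 else 0)"
proof -
  have N0: "N \<noteq> 0" using assms(2) odd_pos by auto
  have full: "(\<Sum>k\<le>N. (-1::int)^k * of_nat (N choose k) * of_nat (Suc k choose a)) = - (if a = N then 1 else 0)"
  proof (cases a)
    case 0 then show ?thesis using T_alt[of N 0] N0 by simp
  next
    case (Suc a')
    have "(\<Sum>k\<le>N. (-1::int)^k * of_nat (N choose k) * of_nat (Suc k choose a)) =
       (\<Sum>k\<le>N. (-1::int)^k * of_nat (N choose k) * of_nat (k choose a')) +
       (\<Sum>k\<le>N. (-1::int)^k * of_nat (N choose k) * of_nat (k choose a))"
      using Suc by (simp add: sum.distrib[symmetric] algebra_simps)
    then show ?thesis using T_alt[of N a'] T_alt[of N a] Suc assms by auto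
  qed
  have "(\<Sum>k\<le>N. (-1::int)^k * of_nat (N choose k) * of_nat (Suc k choose a)) =
     (\<Sum>k<N. (-1::int)^k * of_nat (N choose k) * of_nat (Suc k choose a)) + (-1)^N * of_nat (Suc N choose a)"
    by (simp add: lessThan_Suc_atMost[symmetric])
  then show ?thesis using full assms by simp
qed

lemma comb_final:
  assumes "l \<le> N" "odd N"
  shows "(\<Sum>k<N. (-1::int)^k * of_nat (N choose k) * (of_nat (Suc k choose (N - l)) + of_nat (Suc k choose l))) =
     of_nat (Suc (Suc N) choose Suc l) - (if l = 0 then 1 else 0) - (if l = N then 1 else 0)"
proof -
  have "(\<Sum>k<N. (-1::int)^k * of_nat (N choose k) * (of_nat (Suc k choose (N - l)) + of_nat (Suc k choose l))) =
    (\<Sum>k<N. (-1::int)^k * of_nat (N choose k) * of_nat (Suc k choose (N - l))) +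
    (\<Sum>k<N. (-1::int)^k * of_nat (N choose k) * of_nat (Suc k choose l))"
    by (simp add: sum.distrib[symmetric] algebra_simps)
  also have "\<dots> = of_nat (Suc N choose (N - l)) - (if N - l = N then 1 else 0) + (of_nat (Suc N choose l) - (if l = N then 1 else 0))"
    using S_alt[of "N - l" N] S_alt[of l N] assms by simp
  also have "Suc N choose (N - l) = Suc N choose Suc l"
    using assms binomial_symmetric[of "Suc l" "Suc N"] by simp
  also have "(N - l = N) \<longleftrightarrow> l = 0" using assms by auto
  finally show ?thesis by simp
qed


lemma pd_notvar: "x \<notin> vars p \<Longrightarrow> pderiv_d x p = 0"
  unfolding pderiv_d_def
  by (rule sum.neutral) (auto simp: vars_def not_in_keys_iff_lookup_eq_zero)

lemma rorders_eq: "rorders f = Rv -` vars f"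
  by (auto simp: rorders_def vars_def)

lemma finite_rorders[simp]: "finite (rorders f)"
  unfolding rorders_eq by (rule finite_vimageI) (auto simp: inj_def)

lemma vder_r_superset:
  assumes "finite S" "rorders f \<subseteq> S"
  shows "vder_r f = (\<Sum>k\<in>S. dconst ((-1) ^ k) * (Dx ^^ k) (pderiv_d (Rv k) f))"
  unfolding vder_r_def
  by (rule sum.mono_neutral_left[OF assms]) (auto simp: rorders_eq pd_notvar)

lemma cI_power: "cI ^ (2 * j + 1) = - \<i> * (-1) ^ j / 2 ^ (2 * j + 1)"
proof -
  have "\<i> ^ (2 * j + 1) = \<i> * (-1) ^ j" by (simp add: power_mult)
  then show ?thesis by (simp add: cI_def power_divide field_simps)
qed

lemma const_hier:
  assumes "1 \<le> j"
  shows "2 * alpha_d j * (2 * cI ^ (2 * j - 1 + 2)) = \<i> * (-1) ^ (j + 1)"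
proof -
  have e: "2 * j - 1 + 2 = 2 * j + 1" using assms by simp
  have "2 * j + 1 = Suc (Suc (2 * j - 1))" using assms by simp
  then have a: "(2::complex) * 2 ^ (2 * j - 1) * 2 = 2 ^ (2 * j + 1)"
    by (simp only: power_Suc) (simp add: mult_ac)
  have "2 * alpha_d j * (2 * cI ^ (2 * j - 1 + 2)) = (2 * 2 ^ (2 * j - 1) * 2) * (- \<i> * (-1) ^ j / 2 ^ (2 * j + 1))"
    unfolding e cI_power alpha_d_def by (simp add: mult_ac)
  also have "\<dots> = - \<i> * (-1) ^ j" unfolding a by simp
  finally show ?thesis by simp
qed

lemma restr_pd0_vder:
  fixes N :: nat
  shows "restr isU (pderiv_d (Rv 0) (vder_r (qd * Yd N))) =
    (\<Sum>k<N. dconst ((-1) ^ k) * (Dx ^^ k) (U 0 * (dconst (2 * cI ^ (N + 2) * of_nat (N choose k)) * U (N - 1 - k))))"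
proof -
  let ?F = "qd * Yd N"
  let ?S = "rorders ?F \<union> {..<N}"
  have "restr isU (pderiv_d (Rv 0) (vder_r ?F)) =
     (\<Sum>k\<in>?S. dconst ((-1) ^ k) * (Dx ^^ k) (restr isU (pderiv_d (Rv 0) (pderiv_d (Rv k) ?F))))"
    by (simp add: vder_r_superset[of ?S] pd_sum restr_sum pd_dconst_mult restr_dconst_mult Dxp_pdR0 Dxp_restrU)
  also have "\<dots> = (\<Sum>k\<in>?S. dconst ((-1) ^ k) * (Dx ^^ k) (U 0 * (if k < N then dconst (2 * cI ^ (N + 2) * of_nat (N choose k)) * U (N - 1 - k) else 0)))"
    by (simp add: pd_mult restr_mult Y3)
  also have "\<dots> = (\<Sum>k<N. dconst ((-1) ^ k) * (Dx ^^ k) (U 0 * (if k < N then dconst (2 * cI ^ (N + 2) * of_nat (N choose k)) * U (N - 1 - k) else 0)))"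
    by (rule sum.mono_neutral_right) auto
  also have "\<dots> = (\<Sum>k<N. dconst ((-1) ^ k) * (Dx ^^ k) (U 0 * (dconst (2 * cI ^ (N + 2) * of_nat (N choose k)) * U (N - 1 - k))))"
    by (rule sum.cong) auto
  finally show ?thesis .
qed

lemma hier_coeff:
  fixes j l :: nat
  assumes "1 \<le> j" and "l \<le> 2 * j - 1"
  shows "coeff_d (hier_lhs j) (bad_mono j l) =
           \<i> * (-1) ^ (j + 1) * (of_nat ((2 * j + 1) choose (l + 1))
              - (if l = 0 then 1 else 0) - (if l = 2 * j - 1 then 1 else 0))"
proof -
  define N where "N = 2 * j - 1"
  define a where "a = N - l"
  have oddN: "odd N" using assms by (simp add: N_def)
  have lN: "l \<le> N" using assms by (simp add: N_def)
  have ab: "a \<noteq> l" using oddN lN unfolding a_def by presburger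
  define mq where "mq = (Poly_Mapping.single (Uv a) 1 + Poly_Mapping.single (Uv l) 1 :: dmono)"
  have bad: "bad_mono j l = Poly_Mapping.single (Uv a) 1 + Poly_Mapping.single (Rv 0) 1 + Poly_Mapping.single (Uv l) 1"
    by (simp add: bad_mono_def a_def N_def)
  define K where "K k = 2 * cI ^ (N + 2) * of_nat (N choose k)" for k
  have "restr isU (pderiv_d (Rv 0) (hier_lhs j)) =
     dconst (2 * alpha_d j) * Dx (\<Sum>k<N. dconst ((-1) ^ k) * (Dx ^^ k) (U 0 * (dconst (K k) * U (N - 1 - k))))"
  proof -
    have "restr isU (pderiv_d (Rv 0) (hier_lhs j)) = dconst (2 * alpha_d j) * Dx (restr isU (pderiv_d (Rv 0) (vder_r (qd * Yd N))))"
      by (simp add: hier_lhs_def hier_rhs_def N_def pd_add pd_dconst_mult restr_add restr_dconst_mult pd_Dx_R0 restrU_Dx)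
    then show ?thesis by (simp only: restr_pd0_vder K_def)
  qed
  also have "\<dots> = (\<Sum>k<N. dconst (2 * alpha_d j * (-1) ^ k * K k) * (Dx ^^ Suc k) (U 0 * U (N - 1 - k)))"
    unfolding Dx_sum sum_distrib_left
  proof (rule sum.cong[OF refl])
    fix k
    have "U 0 * (dconst (K k) * U (N - 1 - k)) = dconst (K k) * (U 0 * U (N - 1 - k))" by (simp only: mult_ac)
    then have "dconst (2 * alpha_d j) * Dx (dconst ((-1) ^ k) * (Dx ^^ k) (U 0 * (dconst (K k) * U (N - 1 - k))))
        = (dconst (2 * alpha_d j) * dconst ((-1) ^ k) * dconst (K k)) * (Dx ^^ Suc k) (U 0 * U (N - 1 - k))"
      by (simp only: Dx_dconst_mult Dxp_dconst_mult funpow.simps o_apply mult.assoc)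
    then show "dconst (2 * alpha_d j) * Dx (dconst ((-1) ^ k) * (Dx ^^ k) (U 0 * (dconst (K k) * U (N - 1 - k))))
        = dconst (2 * alpha_d j * (-1) ^ k * K k) * (Dx ^^ Suc k) (U 0 * U (N - 1 - k))"
      by (simp only: dconst_mult)
  qed
  finally have E: "restr isU (pderiv_d (Rv 0) (hier_lhs j)) = \<dots>" .
  have "coeff_d (hier_lhs j) (bad_mono j l) = Poly_Mapping.lookup (restr isU (pderiv_d (Rv 0) (hier_lhs j))) mq"
    unfolding coeff_d_def bad mq_def by (rule coeff_bridge)
  also have "\<dots> = (\<Sum>k<N. 2 * alpha_d j * (-1) ^ k * K k * (of_nat (Suc k choose a) + of_nat (Suc k choose l)))"
    unfolding E lookup_sum lookup_dconst_mult
  proof (rule sum.cong[OF refl])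
    fix k assume "k \<in> {..<N}"
    then have "a + l = N - 1 - k + Suc k" using lN by (auto simp: a_def)
    then have "Poly_Mapping.lookup ((Dx ^^ Suc k) (U 0 * U (N - 1 - k))) mq = of_nat (Suc k choose a) + of_nat (Suc k choose l)"
      unfolding mq_def by (rule lookup_Leib[OF ab])
    then show "2 * alpha_d j * (-1) ^ k * K k * Poly_Mapping.lookup ((Dx ^^ Suc k) (U 0 * U (N - 1 - k))) mq =
         2 * alpha_d j * (-1) ^ k * K k * (of_nat (Suc k choose a) + of_nat (Suc k choose l))"
      by (simp only:)
  qed
  also have "\<dots> = (2 * alpha_d j * (2 * cI ^ (N + 2))) *
      (\<Sum>k<N. (-1)^k * of_nat (N choose k) * (of_nat (Suc k choose (N - l)) + of_nat (Suc k choose l)))"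
    unfolding sum_distrib_left by (rule sum.cong) (simp_all add: K_def a_def mult_ac)
  also have "\<dots> = (2 * alpha_d j * (2 * cI ^ (N + 2))) *
      of_int (\<Sum>k<N. (-1::int)^k * of_nat (N choose k) * (of_nat (Suc k choose (N - l)) + of_nat (Suc k choose l)))"
    by simp
  also have "\<dots> = \<i> * (-1) ^ (j + 1) * (of_nat ((2 * j + 1) choose (l + 1))
              - (if l = 0 then 1 else 0) - (if l = 2 * j - 1 then 1 else 0))"
  proof -
    have "Suc (Suc N) = 2 * j + 1" using assms by (simp add: N_def)
    then show ?thesis
      unfolding comb_final[OF lN oddN] using const_hier[OF assms(1)] by (simp add: N_def)
  qed
  finally show ?thesis .
qed


fun dord :: "dvar \<Rightarrow> nat" where "dord (Uv k) = k" | "dord (Rv k) = k"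

lemma dord_dsucc[simp]: "dord (dsucc x) = Suc (dord x)" by (cases x) auto

lemma pd_nonzero_if_var:
  assumes "x \<in> vars p"
  shows "pderiv_d x p \<noteq> 0"
proof -
  from assms obtain m where m: "m \<in> Poly_Mapping.keys p" "x \<in> Poly_Mapping.keys m" by (auto simp: vars_def)
  have "Poly_Mapping.lookup m x \<noteq> 0" using m(2) by (simp add: in_keys_iff)
  then have mm: "m - Poly_Mapping.single x 1 + Poly_Mapping.single x 1 = m"
    by (intro poly_mapping_eqI) (auto simp: lookup_add lookup_minus lookup_single when_def)
  have c: "(of_nat (Poly_Mapping.lookup (m - Poly_Mapping.single x 1) x + 1) :: complex) \<noteq> 0"
    by (simp only: of_nat_eq_0_iff)
  have "Poly_Mapping.lookup p m \<noteq> 0" using m(1) by (simp add: in_keys_iff)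
  then have "Poly_Mapping.lookup (pderiv_d x p) (m - Poly_Mapping.single x 1) \<noteq> 0"
    using c unfolding lookup_pd mm by simp
  then show ?thesis by auto
qed

lemma Dx_zero_vars:
  assumes "Dx p = 0"
  shows "vars p = {}"
proof (rule ccontr)
  assume ne: "vars p \<noteq> {}"
  define N where "N = Max (dord ` vars p)"
  have "N \<in> dord ` vars p" unfolding N_def using ne by (intro Max_in) auto
  then obtain x where x: "x \<in> vars p" "dord x = N" by blast
  have "dsucc x \<notin> vars p"
  proof
    assume "dsucc x \<in> vars p"
    then have "dord (dsucc x) \<in> dord ` vars p" by blast
    then have "dord (dsucc x) \<le> N" unfolding N_def by (intro Max_ge) auto
    with x(2) show False by simp
  qed
  then have z: "pderiv_d (dsucc x) p = 0" by (rule pd_notvar)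
  have "pderiv_d (dsucc x) (Dx p) = Dx (pderiv_d (dsucc x) p) + pderiv_d x p" by (rule pd_Dx_succ)
  then have "pderiv_d x p = 0" using assms z by simp
  with pd_nonzero_if_var[OF x(1)] show False by simp
qed

lemma Dx_zero_const:
  assumes "Dx p = 0"
  shows "p = dconst (Poly_Mapping.lookup p 0)"
proof (rule poly_mapping_eqI)
  fix k
  have "vars p = {}" using assms by (rule Dx_zero_vars)
  then have "k \<in> Poly_Mapping.keys p \<Longrightarrow> k = 0" by (auto simp: vars_def)
  then show "Poly_Mapping.lookup p k = Poly_Mapping.lookup (dconst (Poly_Mapping.lookup p 0)) k"
    by (auto simp: lookup_dconst in_keys_iff)
qed

lemma Dx_inj_const:
  assumes "Dx F1 = Dx F2" "Poly_Mapping.lookup F1 0 = Poly_Mapping.lookup F2 0"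
  shows "F1 = F2"
proof -
  have "Dx (F1 - F2) = 0" using assms by (simp add: Dx_diff)
  then have e: "F1 - F2 = dconst (Poly_Mapping.lookup (F1 - F2) 0)" by (rule Dx_zero_const)
  have l: "Poly_Mapping.lookup (F1 - F2) 0 = 0" using assms(2) by (simp add: lookup_minus)
  have "F1 - F2 = 0" using e[unfolded l] by simp
  then show ?thesis by simp
qed

lemma mass_flux_eq:
  assumes "Dx F = dt_mass j" "Poly_Mapping.lookup F 0 = 0"
  shows "mass_flux j = F"
  unfolding mass_flux_def
proof (rule the_equality)
  show "Dx F = dt_mass j \<and> Poly_Mapping.lookup F 0 = 0" using assms by (rule conjI)
next
  fix G assume G: "Dx G = dt_mass j \<and> Poly_Mapping.lookup G 0 = 0"
  show "G = F"
  proof (rule Dx_inj_const)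
    show "Dx G = Dx F" using G assms(1) by simp
    show "Poly_Mapping.lookup G 0 = Poly_Mapping.lookup F 0" using G assms(2) by simp
  qed
qed


lemma G1: "restr isU (gG k) = (if k = 0 then 1 else 0)"
  by (induction k) (simp_all add: restr_diff restr_mult restrU_Dx)

lemma G2: "restr isU (pderiv_d (Rv 0) (gG k)) = (if k = 0 then 0 else dconst (- \<i>) * U (k - 1))"
proof (induction k)
  case 0 then show ?case by simp
next
  case (Suc k)
  have "restr isU (pderiv_d (Rv 0) (gG (Suc k))) = Dx (restr isU (pderiv_d (Rv 0) (gG k))) - dconst \<i> * U 0 * restr isU (gG k)"
    by (simp add: pd_diff pd_mult pd_add pd_Dx_R0 restr_diff restr_add restr_mult restrU_Dx G1)
  also have "\<dots> = dconst (- \<i>) * U k"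
    using Suc.IH by (cases k) (simp_all add: G1 dconst_uminus Dx_dconst_mult Dx_uminus del: gG.simps)
  finally show ?case by simp
qed

lemma YR1: "restr isR (Yd n) = dconst (- (cI ^ Suc n)) * R n"
proof (induction n)
  case 0 then show ?case by (simp add: restr_mult restr_uminus dconst_uminus)
next
  case (Suc n)
  show ?case using Suc
    by (simp add: restr_mult restr_add restrR_Dx Dx_uminus Dx_mult dconst_mult[symmetric] dconst_uminus mult_ac) (simp add: dconst_mult mult_ac)
qed

lemma YR2: "restr isR (pderiv_d (Rv k) (Yd n)) = (if k = n then dconst (- (cI ^ Suc n)) else 0)"
proof (induction n arbitrary: k)
  case 0
  then show ?case by (simp add: pd_mult pd_uminus restr_mult restr_uminus dconst_uminus)
next
  case (Suc n)
  have "restr isR (pderiv_d (Rv k) (Yd (Suc n))) =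
     dconst cI * restr isR (pderiv_d (Rv k) (Dx (Yd n)))"
    by (simp add: pd_mult pd_add restr_mult restr_add)
  also have "\<dots> = (if k = Suc n then dconst (- (cI ^ Suc (Suc n))) else 0)"
    by (auto simp add: restr_pd_Dx restrR_Dx Suc.IH dconst_mult[symmetric])
  finally show ?case .
qed

lemma Dxp_U0_const: "(Dx ^^ n) (U 0 * dconst c) = dconst c * U n"
  by (induction n) (simp_all add: Dx_mult mult.commute Dx_dconst_mult)

lemma restrU_vder: "restr isU (vder_r (qd * Yd N)) = dconst ((-1) ^ N * (- (cI ^ Suc N))) * U N"
proof -
  let ?F = "qd * Yd N"
  let ?S = "rorders ?F \<union> {N}"
  have V: "vder_r ?F = (\<Sum>k\<in>?S. dconst ((-1) ^ k) * (Dx ^^ k) (pderiv_d (Rv k) ?F))"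
    by (rule vder_r_superset) auto
  have "restr isU (vder_r ?F) = (\<Sum>k\<in>?S. dconst ((-1) ^ k) * (Dx ^^ k) (restr isU (pderiv_d (Rv k) ?F)))"
    unfolding V by (simp add: restr_sum restr_dconst_mult Dxp_restrU)
  also have "\<dots> = (\<Sum>k\<in>?S. if k = N then dconst ((-1) ^ N) * (Dx ^^ N) (U 0 * dconst (- (cI ^ Suc N))) else 0)"
    by (rule sum.cong) (auto simp: pd_mult restr_mult restr_add Y2 Y1)
  also have "\<dots> = dconst ((-1) ^ N) * (Dx ^^ N) (U 0 * dconst (- (cI ^ Suc N)))"
    by (simp add: sum.delta)
  also have "\<dots> = dconst ((-1) ^ N * (- (cI ^ Suc N))) * U N"
    by (simp add: Dxp_U0_const) (simp add: dconst_mult dconst_uminus)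
  finally show ?thesis .
qed

lemma restrR_pdU0_vder: "N > 0 \<Longrightarrow> restr isR (pderiv_d (Uv 0) (vder_r (qd * Yd N))) = 0"
proof -
  assume N: "N > 0"
  let ?F = "qd * Yd N"
  let ?S = "rorders ?F \<union> {N}"
  have V: "vder_r ?F = (\<Sum>k\<in>?S. dconst ((-1) ^ k) * (Dx ^^ k) (pderiv_d (Rv k) ?F))"
    by (rule vder_r_superset) auto
  have "restr isR (pderiv_d (Uv 0) (vder_r ?F)) = (\<Sum>k\<in>?S. dconst ((-1) ^ k) * (Dx ^^ k) (restr isR (pderiv_d (Uv 0) (pderiv_d (Rv k) ?F))))"
    unfolding V by (simp add: pd_sum restr_sum pd_dconst_mult restr_dconst_mult Dxp_restrR Dxp_pdU0)
  also have "\<dots> = (\<Sum>k\<in>?S. dconst ((-1) ^ k) * (Dx ^^ k) (restr isR (pderiv_d (Rv k) (pderiv_d (Uv 0) ?F))))"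
    by (simp only: pd_comm[of "Uv 0"])
  also have "\<dots> = (\<Sum>k\<in>?S. if k = N then dconst ((-1) ^ N) * (Dx ^^ N) (dconst (- (cI ^ Suc N))) else 0)"
    by (rule sum.cong) (auto simp: pd_mult pd_add restr_mult restr_add YR2)
  also have "\<dots> = 0"
    using N by (simp add: sum.delta Dxp_dconst)
  finally show ?thesis .
qed

lemma cI_even_power: "cI ^ (2 * j) = (-1) ^ j / 2 ^ (2 * j)"
proof -
  have "\<i> ^ (2 * j) = (-1) ^ j" by (simp add: power_mult)
  then show ?thesis by (simp add: cI_def power_divide field_simps)
qed

lemma restrU_hier:
  assumes "1 \<le> j"
  shows "restr isU (hier_rhs j) = dconst ((-1) ^ j) * U (2 * j)"
proof -
  define N where "N = 2 * j - 1"
  have SN: "Suc N = 2 * j" using assms by (simp add: N_def)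
  have oN: "odd N" using assms by (simp add: N_def)
  have "restr isU (hier_rhs j) = dconst (2 * alpha_d j) * Dx (dconst ((-1) ^ N * (- (cI ^ Suc N))) * U N)"
    by (simp add: hier_rhs_def restr_dconst_mult restrU_Dx restrU_vder N_def)
  also have "\<dots> = dconst (2 * alpha_d j * ((-1) ^ N * (- (cI ^ Suc N)))) * U (Suc N)"
    by (simp only: Dx_cU mult.assoc[symmetric] dconst_mult[symmetric])
  also have "2 * alpha_d j * ((-1) ^ N * (- (cI ^ Suc N))) = (-1) ^ j"
  proof -
    have "(-1::complex) ^ N = -1" using oN by simp
    moreover have "2 * alpha_d j = 2 ^ Suc N" by (simp add: alpha_d_def N_def)
    ultimately have "2 * alpha_d j * ((-1) ^ N * (- (cI ^ Suc N))) = 2 ^ Suc N * cI ^ Suc N" by simp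
    also have "\<dots> = (-1) ^ j" unfolding SN cI_even_power by simp
    finally show ?thesis .
  qed
  finally show ?thesis using SN by simp
qed

lemma restrR_pdU0_hier:
  assumes "1 \<le> j"
  shows "restr isR (pderiv_d (Uv 0) (hier_rhs j)) = 0"
proof -
  have "2 * j - 1 > 0" using assms by simp
  then show ?thesis
    by (simp add: hier_rhs_def pd_dconst_mult restr_dconst_mult pd_Dx_U0 restrR_Dx restrR_pdU0_vder)
qed

lemma dt_mass_restr:
  assumes "1 \<le> j"
  shows "restr isU (pderiv_d (Rv 0) (dt_mass j)) = dconst (- \<i> * (-1) ^ j) * U (2 * j)"
proof -
  have c: "restr isU (pderiv_d (Rv 0) (conj_d (ut_d j))) = 0"
  proof -
    have "pderiv_d (Rv 0) (conj_d (ut_d j)) = conj_d (pderiv_d (Uv 0) (ut_d j))"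
      using conj_pd[of "Uv 0" "ut_d j"] by simp
    then have "restr isU (pderiv_d (Rv 0) (conj_d (ut_d j))) = conj_d (restr isR (pderiv_d (Uv 0) (ut_d j)))"
      by (simp add: conj_restrR)
    also have "\<dots> = 0"
      using restrR_pdU0_hier[OF assms] by (simp add: ut_d_def pd_dconst_mult restr_dconst_mult)
    finally show ?thesis .
  qed
  have "restr isU (pderiv_d (Rv 0) (dt_mass j)) = restr isU (ut_d j)"
    using c by (simp add: dt_mass_def pd_add pd_mult restr_add restr_mult)
  also have "\<dots> = dconst (- \<i> * (-1) ^ j) * U (2 * j)"
    using restrU_hier[OF assms] by (simp only: ut_d_def restr_dconst_mult mult.assoc[symmetric] dconst_mult[symmetric])
  finally show ?thesis .
qed


lemma lookup_dvarp: "Poly_Mapping.lookup (dvarp x) m = (if m = Poly_Mapping.single x 1 then 1 else 0)"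
  by (simp add: dvarp_def lookup_dmonom)

lemma dconst_shuffle: "dconst x * (dconst y * (dconst z * A) * B) = dconst (x * y * z) * (A * B)"
  by (simp add: dconst_mult mult_ac)

lemma gauge_coeff:
  fixes j l :: nat
  assumes j: "1 \<le> j" and l: "l \<le> 2 * j - 1"
    and ex: "\<exists>F. Dx F = dt_mass j \<and> Poly_Mapping.lookup F 0 = 0"
  shows "coeff_d (gaugeP j) (bad_mono j l) =
           - (\<i> * (-1) ^ (j + 1) * (of_nat ((2 * j + 1) choose (l + 1))
              - (if l = 0 then 1 else 0) - (if l = 2 * j - 1 then 1 else 0)))"
proof -
  define N where "N = 2 * j - 1"
  define a where "a = N - l"
  have oddN: "odd N" using j by (simp add: N_def)
  have lN: "l \<le> N" using l by (simp add: N_def)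
  have SN: "Suc N = 2 * j" using j by (simp add: N_def)
  have ab: "a \<noteq> l" using oddN lN unfolding a_def by presburger
  have aN: "a + l = N" using lN by (simp add: a_def)
  define mq where "mq = (Poly_Mapping.single (Uv a) 1 + Poly_Mapping.single (Uv l) 1 :: dmono)"
  have bad: "bad_mono j l = Poly_Mapping.single (Uv a) 1 + Poly_Mapping.single (Rv 0) 1 + Poly_Mapping.single (Uv l) 1"
    by (simp add: bad_mono_def a_def N_def)
  from ex obtain F where F: "Dx F = dt_mass j" "Poly_Mapping.lookup F 0 = 0" by blast
  have MF: "mass_flux j = F" using F by (rule mass_flux_eq)
  define e where "e = - \<i> * (-1) ^ j"
  define X where "X = restr isU (pderiv_d (Rv 0) F)"
  have DX: "Dx X = dconst e * U (2 * j)"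
  proof -
    have "Dx X = restr isU (pderiv_d (Rv 0) (Dx F))" by (simp add: X_def pd_Dx_R0 restrU_Dx)
    then show ?thesis using F(1) dt_mass_restr[OF j] by (simp add: e_def)
  qed
  have "Dx (X - dconst e * U N) = 0" using DX SN by (simp add: Dx_diff)
  then have "X - dconst e * U N = dconst (Poly_Mapping.lookup (X - dconst e * U N) 0)" by (rule Dx_zero_const)
  then obtain c where Xc: "X = dconst e * U N + dconst c" by (metis diff_eq_eq add.commute)
  have mqU0: "mq \<noteq> Poly_Mapping.single (Uv 0) 1"
  proof
    assume H: "mq = Poly_Mapping.single (Uv 0) 1"
    have "Poly_Mapping.lookup mq (Uv a) = Poly_Mapping.lookup (Poly_Mapping.single (Uv 0) 1 :: dmono) (Uv a)"
      "Poly_Mapping.lookup mq (Uv l) = Poly_Mapping.lookup (Poly_Mapping.single (Uv 0) 1 :: dmono) (Uv l)"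
      using H by simp_all
    then show False using ab by (auto simp: mq_def lookup_add lookup_single when_def split: if_splits)
  qed
  have part1: "Poly_Mapping.lookup (U 0 * X) mq = e * (if l = 0 \<or> l = N then 1 else 0)"
  proof -
    have "Poly_Mapping.lookup (U 0 * X) mq = e * Poly_Mapping.lookup (U 0 * U N) mq + c * Poly_Mapping.lookup (U 0) mq"
      unfolding Xc by (simp add: distrib_left lookup_add mult.left_commute[of "U 0"] mult.commute[of "U 0" "dconst c"] lookup_dconst_mult)
    also have "Poly_Mapping.lookup (U 0 * U N) mq = (if l = 0 \<or> l = N then 1 else 0)"
      unfolding mq_def lookup_UU[OF ab] using aN by (auto simp: a_def)
    also have "Poly_Mapping.lookup (U 0) mq = 0" using mqU0 by (simp add: lookup_dvarp)
    finally show ?thesis by simp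
  qed
  define s where "s = ((-1::complex) ^ (j + 1))"
  have gsum: "restr isU (pderiv_d (Rv 0) (dconst s *
       (\<Sum>k\<in>{1..2 * j}. dconst (of_nat (2 * j choose k)) * gG k * dvarp (Uv (2 * j - k))))) =
      (\<Sum>k\<in>{1..2 * j}. dconst (s * of_nat (2 * j choose k) * (- \<i>)) * (U (k - 1) * U (2 * j - k)))"
    unfolding pd_dconst_mult restr_dconst_mult pd_sum restr_sum sum_distrib_left
  proof (rule sum.cong[OF refl])
    fix k assume "k \<in> {1..2 * j}"
    then have k0: "k \<noteq> 0" by simp
    show "dconst s * restr isU (pderiv_d (Rv 0) (dconst (of_nat (2 * j choose k)) * gG k * U (2 * j - k))) =
       dconst (s * of_nat (2 * j choose k) * (- \<i>)) * (U (k - 1) * U (2 * j - k))"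
      using k0 by (simp add: pd_mult restr_mult G2 del: dconst_of_nat) (simp only: dconst_shuffle, simp)
  qed
  have part2: "Poly_Mapping.lookup (\<Sum>k\<in>{1..2 * j}. dconst (s * of_nat (2 * j choose k) * (- \<i>)) * (U (k - 1) * U (2 * j - k))) mq
     = s * (- \<i>) * of_nat ((2 * j + 1) choose (l + 1))"
  proof -
    have "Poly_Mapping.lookup (\<Sum>k\<in>{1..2 * j}. dconst (s * of_nat (2 * j choose k) * (- \<i>)) * (U (k - 1) * U (2 * j - k))) mq
      = (\<Sum>k\<in>{1..2 * j}. (if k = a + 1 then s * (- \<i>) * of_nat (2 * j choose k) else 0) +
                          (if k = l + 1 then s * (- \<i>) * of_nat (2 * j choose k) else 0))"
      unfolding lookup_sum lookup_dconst_mult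
    proof (rule sum.cong[OF refl])
      fix k assume k: "k \<in> {1..2 * j}"
      have "((k - 1 = a \<and> 2 * j - k = l) \<or> (k - 1 = l \<and> 2 * j - k = a)) \<longleftrightarrow> (k = a + 1 \<or> k = l + 1)"
        using k aN SN by auto
      then show "s * of_nat (2 * j choose k) * - \<i> * Poly_Mapping.lookup (U (k - 1) * U (2 * j - k)) mq =
         (if k = a + 1 then s * - \<i> * of_nat (2 * j choose k) else 0) + (if k = l + 1 then s * - \<i> * of_nat (2 * j choose k) else 0)"
        unfolding mq_def lookup_UU[OF ab] using ab by auto
    qed
    also have "\<dots> = s * (- \<i>) * of_nat (2 * j choose (a + 1)) + s * (- \<i>) * of_nat (2 * j choose (l + 1))"
      using aN SN by (simp add: sum.distrib sum.delta)
    also have "2 * j choose (a + 1) = 2 * j choose l"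
    proof -
      have "a + 1 = 2 * j - l" using lN SN by (simp add: a_def)
      then show ?thesis using lN SN binomial_symmetric[of l "2 * j"] by simp
    qed
    also have "s * (- \<i>) * of_nat (2 * j choose l) + s * (- \<i>) * of_nat (2 * j choose (l + 1)) =
        s * (- \<i>) * of_nat ((2 * j + 1) choose (l + 1))"
      by (simp add: algebra_simps)
    finally show ?thesis .
  qed
  have "coeff_d (gaugeP j) (bad_mono j l) = Poly_Mapping.lookup (restr isU (pderiv_d (Rv 0) (gaugeP j))) mq"
    unfolding coeff_d_def bad mq_def by (rule coeff_bridge)
  also have "restr isU (pderiv_d (Rv 0) (gaugeP j)) = U 0 * X +
      (\<Sum>k\<in>{1..2 * j}. dconst (s * of_nat (2 * j choose k) * (- \<i>)) * (U (k - 1) * U (2 * j - k)))"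
  proof -
    have "restr isU (pderiv_d (Rv 0) (gaugeP j)) = restr isU (pderiv_d (Rv 0) (qd * F)) +
       restr isU (pderiv_d (Rv 0) (dconst s * (\<Sum>k\<in>{1..2 * j}. dconst (of_nat (2 * j choose k)) * gG k * dvarp (Uv (2 * j - k)))))"
      unfolding gaugeP_def MF s_def by (simp only: pd_add restr_add)
    also have "restr isU (pderiv_d (Rv 0) (qd * F)) = U 0 * X"
      by (simp add: pd_mult restr_mult X_def)
    finally show ?thesis unfolding gsum .
  qed
  also have "Poly_Mapping.lookup \<dots> mq = e * (if l = 0 \<or> l = N then 1 else 0) + s * (- \<i>) * of_nat ((2 * j + 1) choose (l + 1))"
    by (simp only: lookup_add part1 part2)
  also have "\<dots> = - (\<i> * (-1) ^ (j + 1) * (of_nat ((2 * j + 1) choose (l + 1))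
              - (if l = 0 then 1 else 0) - (if l = 2 * j - 1 then 1 else 0)))"
  proof -
    have "N \<noteq> 0" using oddN odd_pos by auto
    then show ?thesis by (auto simp: e_def s_def N_def algebra_simps)
  qed
  finally show ?thesis .
qed


lemma Dxp_commute[simp]: "(Dx ^^ k) (Dx p) = Dx ((Dx ^^ k) p)"
  by (induction k) auto

definition exact :: "dpoly \<Rightarrow> bool" where "exact p \<longleftrightarrow> (\<exists>L. p = Dx L)"

lemma exact_Dx[simp]: "exact (Dx L)" by (auto simp: exact_def)
lemma exact_0[simp]: "exact 0" using exact_Dx[of 0] by simp
lemma exact_add: "exact p \<Longrightarrow> exact q \<Longrightarrow> exact (p + q)"
  by (auto simp: exact_def Dx_add[symmetric])
lemma exact_uminus: "exact p \<Longrightarrow> exact (- p)"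
  by (auto simp: exact_def Dx_uminus[symmetric])
lemma exact_diff: "exact p \<Longrightarrow> exact q \<Longrightarrow> exact (p - q)"
  by (auto simp: exact_def Dx_diff[symmetric])
lemma exact_dconst_mult: "exact p \<Longrightarrow> exact (dconst c * p)"
  by (auto simp: exact_def Dx_dconst_mult[symmetric])
lemma exact_sum: "(\<And>i. i \<in> I \<Longrightarrow> exact (g i)) \<Longrightarrow> exact (\<Sum>i\<in>I. g i)"
  by (induction I rule: infinite_finite_induct) (auto intro: exact_add)

lemma IBP: "exact ((Dx ^^ k) a * b - a * (dconst ((-1) ^ k) * (Dx ^^ k) b))"
proof (induction k arbitrary: b)
  case 0 then show ?case by simp
next
  case (Suc k)
  have e: "(Dx ^^ Suc k) a * b - a * (dconst ((-1) ^ Suc k) * (Dx ^^ Suc k) b) =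
      Dx ((Dx ^^ k) a * b) - ((Dx ^^ k) a * Dx b - a * (dconst ((-1) ^ k) * (Dx ^^ k) (Dx b)))"
    by (simp add: Dx_mult dconst_uminus)
  show ?case unfolding e by (intro exact_diff exact_Dx Suc.IH)
qed

definition ev :: "(nat \<Rightarrow> dvar) \<Rightarrow> nat \<Rightarrow> dpoly \<Rightarrow> dpoly" where
  "ev v M f = (\<Sum>k<M. dconst ((-1) ^ k) * (Dx ^^ k) (pderiv_d (v k) f))"

lemma ev_Dx:
  assumes sv: "\<And>k. dsucc (v k) = v (Suc k)" and b: "\<And>z. dsucc z \<noteq> v 0"
    and z: "pderiv_d (v M) L = 0"
  shows "ev v (Suc M) (Dx L) = 0"
proof -
  have pdD: "pderiv_d (v k) (Dx L) = Dx (pderiv_d (v k) L) + (if k = 0 then 0 else pderiv_d (v (k - 1)) L)" for k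
  proof (cases k)
    case 0 then show ?thesis using pd_Dx_base[of "v 0" L] b by simp
  next
    case (Suc k') then show ?thesis using pd_Dx_succ[of "v k'" L] sv[of k'] by simp
  qed
  have "ev v (Suc M) (Dx L) = (\<Sum>k<Suc M. dconst ((-1) ^ k) * (Dx ^^ Suc k) (pderiv_d (v k) L)) +
     (\<Sum>k<Suc M. dconst ((-1) ^ k) * (Dx ^^ k) (if k = 0 then 0 else pderiv_d (v (k - 1)) L))"
    unfolding ev_def pdD by (simp add: Dxp_add distrib_left sum.distrib)
  also have "(\<Sum>k<Suc M. dconst ((-1) ^ k) * (Dx ^^ k) (if k = 0 then 0 else pderiv_d (v (k - 1)) L)) =
      - (\<Sum>k<M. dconst ((-1) ^ k) * (Dx ^^ Suc k) (pderiv_d (v k) L))"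
    by (subst sum.lessThan_Suc_shift) (simp add: dconst_uminus sum_negf)
  also have "(\<Sum>k<Suc M. dconst ((-1) ^ k) * (Dx ^^ Suc k) (pderiv_d (v k) L)) =
      (\<Sum>k<M. dconst ((-1) ^ k) * (Dx ^^ Suc k) (pderiv_d (v k) L)) + dconst ((-1) ^ M) * (Dx ^^ Suc M) (pderiv_d (v M) L)"
    by simp
  finally show ?thesis using z by simp
qed

lemma chain_rule:
  assumes "vars p \<subseteq> {x. dord x < M}"
  shows "Dx p = (\<Sum>k<M. R (Suc k) * pderiv_d (Rv k) p + U (Suc k) * pderiv_d (Uv k) p)"
proof (induction p rule: dpoly_induct_vars[where V = "{x. dord x < M}"])
  case (1 c) then show ?case by simp
next
  case (2 x)
  then show ?case
  proof (cases x)
    case (Uv n)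
    with 2 have "n < M" by simp
    then show ?thesis using Uv by (simp add: sum.distrib if_distrib[of "\<lambda>t. _ * t"] sum.delta cong: if_cong)
  next
    case (Rv n)
    with 2 have "n < M" by simp
    then show ?thesis using Rv by (simp add: sum.distrib if_distrib[of "\<lambda>t. _ * t"] sum.delta cong: if_cong)
  qed
next
  case (3 a b) then show ?case by (simp add: Dx_add pd_add distrib_left sum.distrib algebra_simps)
next
  case (4 a b) then show ?case by (simp add: Dx_mult pd_mult sum_distrib_left sum_distrib_right sum.distrib algebra_simps)
next
  case 5 then show ?case using assms by simp
qed


unbundle fps_syntax

definition DS :: "dpoly fps \<Rightarrow> dpoly fps" where "DS f = Abs_fps (\<lambda>n. Dx (f $ n))"

lemma DS_nth[simp]: "DS f $ n = Dx (f $ n)" by (simp add: DS_def)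
lemma DS_add: "DS (f + g) = DS f + DS g" by (simp add: fps_eq_iff Dx_add)
lemma DS_diff: "DS (f - g) = DS f - DS g" by (simp add: fps_eq_iff Dx_diff)
lemma DS_sum: "DS (\<Sum>i\<in>I. g i) = (\<Sum>i\<in>I. DS (g i))"
  by (induction I rule: infinite_finite_induct) (auto simp: DS_add fps_eq_iff)
lemma DS_mult: "DS (f * g) = DS f * g + f * DS g"
  by (simp add: fps_eq_iff fps_mult_nth Dx_sum Dx_mult sum.distrib)
lemma DS_const[simp]: "DS (fps_const c) = fps_const (Dx c)"
  by (simp add: fps_eq_iff)
lemma DS_X[simp]: "DS fps_X = 0"
  by (simp add: fps_eq_iff)
lemma DS_1[simp]: "DS 1 = 0"
  by (simp add: fps_eq_iff)
lemma DS_power: "DS (f ^ Suc n) = of_nat (Suc n) * f ^ n * DS f"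
proof (induction n)
  case 0 then show ?case by simp
next
  case (Suc n)
  have "DS (f ^ Suc (Suc n)) = DS (f * f ^ Suc n)" by simp
  also have "\<dots> = DS f * f ^ Suc n + f * (of_nat (Suc n) * f ^ n * DS f)"
    by (simp only: DS_mult Suc)
  also have "\<dots> = of_nat (Suc (Suc n)) * f ^ Suc n * DS f"
    by (simp add: algebra_simps)
  finally show ?case .
qed

definition Ys :: "dpoly fps" where "Ys = Abs_fps Yd"
definition Vs :: "dpoly fps" where "Vs = Abs_fps (\<lambda>n. conj_d (Yd n))"

lemma cI_2i: "dconst (2 * \<i>) * dconst cI = 1"
  by (simp add: cI_def dconst_mult[symmetric])

lemma cnj_cI: "cnj cI = - cI" by (simp add: cI_def)

lemma Ric_Y: "fps_const (dconst (2 * \<i>)) * Ys + fps_const rd = fps_X * (DS Ys + fps_const qd * Ys ^ 2)"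
proof (rule fps_ext)
  fix n
  show "(fps_const (dconst (2 * \<i>)) * Ys + fps_const rd) $ n = (fps_X * (DS Ys + fps_const qd * Ys ^ 2)) $ n"
  proof (cases n)
    case 0 then show ?thesis
      by (simp add: Ys_def mult.assoc[symmetric] cI_2i)
  next
    case (Suc m)
    have "(\<Sum>k\<in>{..m}. Yd (m - k) * Yd k) = (\<Sum>i=0..m. Yd i * Yd (m - i))"
      by (simp add: atLeast0AtMost mult.commute)
    also have "\<dots> = (Ys ^ 2) $ m" by (simp add: power2_eq_square fps_mult_nth Ys_def)
    finally have sq: "(Ys ^ 2) $ m = (\<Sum>k\<in>{..m}. Yd (m - k) * Yd k)" ..
    show ?thesis using Suc
      by (simp add: sq del: Yd_Suc') (simp add: Ys_def mult.assoc[symmetric] cI_2i)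
  qed
qed

lemma cI_m2i: "dconst (- (2 * \<i>)) * dconst (- cI) = 1"
  by (simp add: cI_def dconst_mult[symmetric])

lemma conj_Y0: "conj_d (Yd 0) = dconst cI * qd"
  by (simp add: conj_mult conj_uminus cnj_cI dconst_uminus)

lemma conj_YSuc: "conj_d (Yd (Suc m)) = dconst (- cI) * (Dx (conj_d (Yd m)) + rd * (\<Sum>k\<in>{..m}. conj_d (Yd (m - k)) * conj_d (Yd k)))"
  by (simp add: conj_mult conj_add conj_sum conj_Dx cnj_cI)

lemma Ric_V: "fps_const (dconst (- (2 * \<i>))) * Vs + fps_const qd = fps_X * (DS Vs + fps_const rd * Vs ^ 2)"
proof (rule fps_ext)
  fix n
  show "(fps_const (dconst (- (2 * \<i>))) * Vs + fps_const qd) $ n = (fps_X * (DS Vs + fps_const rd * Vs ^ 2)) $ n"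
  proof (cases n)
    case 0
    have "dconst (- (2 * \<i>)) * (dconst cI * qd) + qd = 0"
      using cI_2i by (simp add: dconst_uminus mult.assoc[symmetric])
    then show ?thesis using 0 by (simp add: Vs_def conj_Y0 del: Yd_0')
  next
    case (Suc m)
    have "(\<Sum>k\<in>{..m}. conj_d (Yd (m - k)) * conj_d (Yd k)) = (\<Sum>i=0..m. conj_d (Yd i) * conj_d (Yd (m - i)))"
      by (simp add: atLeast0AtMost mult.commute)
    also have "\<dots> = (Vs ^ 2) $ m" by (simp add: power2_eq_square fps_mult_nth Vs_def)
    finally have sq: "(Vs ^ 2) $ m = (\<Sum>k\<in>{..m}. conj_d (Yd (m - k)) * conj_d (Yd k))" ..
    show ?thesis using Suc
      by (simp add: sq del: Yd_Suc') (simp add: Vs_def conj_YSuc mult.assoc[symmetric] cI_m2i del: Yd_Suc')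
  qed
qed

definition xs :: "dpoly fps" where "xs = fps_X * Ys * Vs"
definition ws :: "dpoly fps" where "ws = fps_const qd * Ys + fps_const rd * Vs"

lemma DS_xs: "DS xs = ws - xs * ws"
proof -
  define c where "c = fps_const (dconst (2 * \<i>))"
  have cneg: "fps_const (dconst (- (2 * \<i>))) = - c" by (simp add: c_def dconst_uminus)
  have A: "fps_X * DS Ys = c * Ys + fps_const rd - fps_X * (fps_const qd * Ys ^ 2)"
    unfolding c_def Ric_Y by (simp add: algebra_simps)
  have B: "fps_X * DS Vs = - c * Vs + fps_const qd - fps_X * (fps_const rd * Vs ^ 2)"
    unfolding cneg[symmetric] Ric_V by (simp add: algebra_simps)
  have "DS xs = (fps_X * DS Ys) * Vs + Ys * (fps_X * DS Vs)"
    by (simp add: xs_def DS_mult algebra_simps)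
  also have "\<dots> = ws - xs * ws"
    unfolding A B by (simp add: xs_def ws_def algebra_simps power2_eq_square)
  finally show ?thesis .
qed

lemma DS_fconst_mult: "DS (fps_const (dconst a) * f) = fps_const (dconst a) * DS f"
  by (simp add: DS_mult)

lemma dconst_inv_nat: "k \<noteq> 0 \<Longrightarrow> dconst (1 / of_nat k) * of_nat k = 1"
proof -
  assume k: "k \<noteq> 0"
  have "dconst (1 / of_nat k) * of_nat k = dconst (1 / of_nat k) * dconst (of_nat k)" by simp
  also have "\<dots> = dconst (1 / of_nat k * of_nat k)" by (simp only: dconst_mult)
  also have "1 / of_nat k * of_nat k = (1::complex)" using k by simp
  finally show ?thesis by simp
qed

lemma fps_const_inv_nat: "k \<noteq> 0 \<Longrightarrow> fps_const (dconst (1 / of_nat k)) * of_nat k = (1 :: dpoly fps)"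
  by (metis dconst_inv_nat fps_const_1_eq_1 fps_const_mult fps_of_nat)

definition Ls :: "nat \<Rightarrow> dpoly fps" where
  "Ls m = (\<Sum>k\<in>{1..m}. fps_const (dconst (1 / of_nat k)) * xs ^ k)"

lemma DS_Ls: "DS (Ls m) = ws * (1 - xs ^ m)"
proof -
  have "DS (Ls m) = (\<Sum>k\<in>{1..m}. xs ^ (k - 1) * DS xs)"
    unfolding Ls_def DS_sum
  proof (rule sum.cong[OF refl])
    fix k assume "k \<in> {1..m}"
    then obtain k' where k: "k = Suc k'" by (cases k) auto
    have "DS (fps_const (dconst (1 / of_nat k)) * xs ^ k) = (fps_const (dconst (1 / of_nat k)) * of_nat k) * (xs ^ k' * DS xs)"
      unfolding DS_fconst_mult k DS_power by (simp add: mult_ac)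
    also have "\<dots> = xs ^ (k - 1) * DS xs" using k fps_const_inv_nat[of k] by simp
    finally show "DS (fps_const (dconst (1 / of_nat k)) * xs ^ k) = xs ^ (k - 1) * DS xs" .
  qed
  also have "\<dots> = (\<Sum>k<m. xs ^ k) * DS xs"
  proof -
    have "(\<Sum>k\<in>{1..m}. xs ^ (k - 1) * DS xs) = (\<Sum>k<m. xs ^ k * DS xs)"
    proof (induction m)
      case 0 then show ?case by simp
    next
      case (Suc m) then show ?case by simp
    qed
    then show ?thesis by (simp add: sum_distrib_right)
  qed
  also have "\<dots> = ws * ((1 - xs) * (\<Sum>k<m. xs ^ k))"
    unfolding DS_xs by (simp add: algebra_simps)
  also have "\<dots> = ws * (1 - xs ^ m)" by (simp add: one_diff_power_eq)
  finally show ?thesis .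
qed

lemma ws_exact: "ws $ n = Dx (Ls (Suc n) $ n)"
proof -
  have "ws = DS (Ls (Suc n)) + ws * xs ^ Suc n"
    unfolding DS_Ls by (simp add: algebra_simps)
  moreover have "(ws * xs ^ Suc n) $ n = 0"
  proof -
    have "ws * xs ^ Suc n = fps_X ^ Suc n * (ws * (Ys * Vs) ^ Suc n)"
      by (simp add: xs_def power_mult_distrib mult_ac)
    then show ?thesis by (simp only: fps_X_power_mult_nth) simp
  qed
  ultimately show ?thesis by (metis DS_nth add.right_neutral fps_add_nth)
qed

lemma thmC: "\<exists>L. qd * Yd n + conj_d (qd * Yd n) = Dx L"
proof -
  have "ws $ n = qd * Yd n + conj_d (qd * Yd n)"
    by (simp add: ws_def Ys_def Vs_def conj_mult del: Yd_Suc' Yd_0')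
  then show ?thesis using ws_exact by metis
qed


lemma bound_exists: "\<exists>M. \<forall>x\<in>vars p \<union> vars q. dord x < M"
proof -
  have "finite (dord ` (vars p \<union> vars q))" by simp
  then obtain M where "\<forall>n\<in>dord ` (vars p \<union> vars q). n < M" using finite_nat_set_iff_bounded by blast
  then show ?thesis by auto
qed

lemma ev_add: "ev v M (p + q) = ev v M p + ev v M q"
  by (simp add: ev_def pd_add Dxp_add distrib_left sum.distrib)
lemma ev_uminus: "ev v M (- p) = - ev v M p"
  by (simp add: ev_def pd_uminus Dxp_uminus sum_negf)
lemma ev_diff: "ev v M (p - q) = ev v M p - ev v M q"
  using ev_add[of v M p "- q"] by (simp add: ev_uminus)

lemma conj_ev: "conj_d (ev Rv M p) = ev Uv M (conj_d p)"
  by (simp add: ev_def conj_sum conj_mult Dxp_conj conj_pd)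

lemma IBP_var: "exact (x * (dconst ((-1) ^ k) * (Dx ^^ k) b) - (Dx ^^ k) x * b)"
  using exact_uminus[OF IBP[of k x b]] by simp

lemma dt_exact:
  assumes j: "1 \<le> j"
  shows "exact (dt_mass j)"
proof -
  define N where "N = 2 * j - 1"
  define H where "H = qd * Yd N"
  obtain L where L: "H + conj_d H = Dx L" using thmC[of N] unfolding H_def by blast
  obtain M0 where M0: "\<forall>x\<in>vars H \<union> vars L. dord x < M0" using bound_exists by blast
  define M where "M = Suc M0"
  have nv: "x \<notin> vars H \<and> x \<notin> vars L" if "dord x \<ge> M0" for x
    using M0 that by (meson UnI1 UnI2 not_le)
  have zL: "pderiv_d (Uv M0) L = 0" using nv[of "Uv M0"] by (simp add: pd_notvar)
  have varsH: "vars H \<subseteq> {x. dord x < M}"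
  proof
    fix x assume "x \<in> vars H"
    then have "dord x < M0" using M0 by blast
    then show "x \<in> {x. dord x < M}" by (simp add: M_def)
  qed
  have E: "vder_r H = ev Rv M H"
    unfolding ev_def
  proof (rule vder_r_superset)
    show "finite {..<M}" by simp
    show "rorders H \<subseteq> {..<M}" using varsH by (auto simp: rorders_eq)
  qed
  define A where "A = ev Rv M H"
  define B where "B = ev Uv M H"
  have cA: "conj_d A = - B"
  proof -
    have "conj_d A = ev Uv M (conj_d H)" by (simp add: A_def conj_ev)
    also have "conj_d H = Dx L - H" using L by (simp add: algebra_simps)
    also have "ev Uv M (Dx L - H) = ev Uv M (Dx L) - B" by (simp add: ev_diff B_def)
    also have "ev Uv M (Dx L) = 0" unfolding M_def
    proof (rule ev_Dx)
      show "\<And>z. dsucc z \<noteq> Uv 0" by (metis dsucc.elims dvar.distinct(1) dvar.inject(1) nat.distinct(1))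
    qed (auto simp: zL)
    finally show ?thesis by simp
  qed
  define c where "c = 2 * alpha_d j"
  define c1 where "c1 = \<i> * c"
  have cc: "cnj c1 = - c1" by (simp add: c1_def c_def alpha_d_def)
  have hr: "hier_rhs j = dconst c * Dx A"
    unfolding hier_rhs_def c_def A_def N_def[symmetric] H_def[symmetric] E ..
  have ut: "ut_d j = - (dconst c1 * Dx A)"
  proof -
    have "ut_d j = (dconst (- \<i>) * dconst c) * Dx A" unfolding ut_d_def hr by (simp only: mult.assoc)
    also have "dconst (- \<i>) * dconst c = - dconst c1" by (simp add: c1_def dconst_mult dconst_uminus)
    finally show ?thesis by simp
  qed
  have cut: "conj_d (ut_d j) = - (dconst c1 * Dx B)"
    unfolding ut by (simp add: conj_mult conj_Dx cA cc Dx_uminus conj_uminus dconst_uminus)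
  have dt: "dt_mass j = - (dconst c1 * (Dx (rd * A) + Dx (qd * B) - (R 1 * A + U 1 * B)))"
    unfolding dt_mass_def cut unfolding ut by (simp add: Dx_mult algebra_simps)
  have "exact (R 1 * A + U 1 * B - Dx H)"
  proof -
    have "R 1 * A + U 1 * B - Dx H =
      (\<Sum>k<M. R 1 * (dconst ((-1) ^ k) * (Dx ^^ k) (pderiv_d (Rv k) H)) - (Dx ^^ k) (R 1) * pderiv_d (Rv k) H) +
      (\<Sum>k<M. U 1 * (dconst ((-1) ^ k) * (Dx ^^ k) (pderiv_d (Uv k) H)) - (Dx ^^ k) (U 1) * pderiv_d (Uv k) H)"
      unfolding chain_rule[OF varsH] A_def B_def ev_def
      by (simp add: sum_distrib_left sum_subtractf sum.distrib algebra_simps)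
    then show ?thesis by (simp only:) (intro exact_add exact_sum IBP_var)
  qed
  then have "exact (R 1 * A + U 1 * B)"
    using exact_add[OF _ exact_Dx[of H]] by fastforce
  then show ?thesis unfolding dt by (rule exact_uminus[OF exact_dconst_mult[OF exact_diff[OF exact_add[OF exact_Dx exact_Dx]]]])
qed

lemma mass_flux_exists:
  assumes "1 \<le> j"
  shows "\<exists>F. Dx F = dt_mass j \<and> Poly_Mapping.lookup F 0 = 0"
proof -
  obtain F0 where F0: "dt_mass j = Dx F0" using dt_exact[OF assms] by (auto simp: exact_def)
  define F where "F = F0 - dconst (Poly_Mapping.lookup F0 0)"
  have "Dx F = dt_mass j" by (simp add: F_def Dx_diff F0)
  moreover have "Poly_Mapping.lookup F 0 = 0" by (simp add: F_def lookup_minus lookup_dconst)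
  ultimately show ?thesis by blast
qed


theorem lemma2p6:
  fixes j l :: nat
  assumes "1 \<le> j" and "l \<le> 2 * j - 1"
  shows "coeff_d (hier_lhs j) (bad_mono j l) =
           \<i> * (-1) ^ (j + 1) * (of_nat ((2 * j + 1) choose (l + 1))
              - (if l = 0 then 1 else 0) - (if l = 2 * j - 1 then 1 else 0))
       \<and> coeff_d (gaugeP j) (bad_mono j l) =
           - (\<i> * (-1) ^ (j + 1) * (of_nat ((2 * j + 1) choose (l + 1))
              - (if l = 0 then 1 else 0) - (if l = 2 * j - 1 then 1 else 0)))"
    using hier_coeff[OF assms] gauge_coeff[OF assms mass_flux_exists[OF assms(1)]] by (rule conjI)

end
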